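(* Let $R(X)=\sum_{n=1}^{\infty}\frac{X^{n}}{n!}(e_{1}-g_{1})^{n-1}\in\mathfrak H[[X]]$. For any admissible index $\mathbf{k}$, \[ \frac{1}{1-R(X)g_{1}}\,\mathrm{sh}_{\hbar}\,g_{\mathbf{k}}\frac{1}{1-g_{1}X}\equiv\frac{1}{1-g_{1}X}\,\mathrm{sh}_{\hbar}\,E_{\mathbf{k}}\frac{1}{1-R(X)g_{1}} \] modulo the $\mathcal{C}$-submodule $\mathfrak{n}[[X]]$ of $\mathfrak{H}[[X]]$ (i.e. every coefficient of the difference lies in $\mathfrak n$).
   Context: Let $\mathcal{C}=\mathbb{Q}[\hbar]$ ($\hbar$ formal), $\mathfrak{H}=\mathcal{C}\langle a,b\rangle$ the non-commutative polynomial ring. For $k\ge1$, $g_k=ba^k$, $e_k=b(a+\hbar)a^{k-1}$ (so $e_1-g_1=\hbar b$). $A=\{\hbar b\}\cup\{ba^k\mid k\ge1\}$, $\mathcal{C}\langle A\rangle$ the $\mathcal{C}$-subalgebra generated by $1$ and $A$, $\widehat{\mathfrak H^0}=\mathcal C+\sum_{k\ge1}\mathcal C\langle A\rangle g_k$. Let $\mathfrak n_0$ be the $\mathcal C$-span of $(\hbar b)^{\alpha_1}g_{\beta_1+1}\cdots(\hbar b)^{\alpha_r}g_{\beta_r+1}$ with $r\ge1$, $\alpha_i,\beta_i\ge0$ and $\alpha_s\ge1,\beta_t\ge1$ for some $1\le s\le t\le r$; $\mathfrak n=\mathfrak n_0+\hbar\widehat{\mathfrak H^0}$. Shuffle product $\mathrm{sh}_\hbar$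 on $\mathfrak H$: $\mathcal C$-bilinear with $w\,\mathrm{sh}_\hbar\,1=1\,\mathrm{sh}_\hbar\,w=w$, $wa\,\mathrm{sh}_\hbar\,w'a=(wa\,\mathrm{sh}_\hbar\,w'+w\,\mathrm{sh}_\hbar\,w'a+\hbar(w\,\mathrm{sh}_\hbar\,w'))a$, $wb\,\mathrm{sh}_\hbar\,w'=w\,\mathrm{sh}_\hbar\,w'b=(w\,\mathrm{sh}_\hbar\,w')b$; extended to $\mathfrak H[[X]]$ coefficientwise. $\frac{1}{1-F}=\sum_{n\ge0}F^n$ for $F$ without constant term. Indices: finite tuples $\mathbf k=(k_1,\dots,k_r)$ of positive integers, admissible if empty or $k_r\ge2$; $g_{\mathbf k}=g_{k_1}\cdots g_{k_r}$, $g_\varnothing=1$. $E_{1^m}=\frac1{(m+1)!}\sum_{j=0}^m g_1^{\mathrm{sh}_\hbar j}\,\mathrm{sh}_\hbar\,e_1^{\mathrm{sh}_\hbar(m-j)}$ ($m\ge0$, $u^{\mathrm{sh}_\hbar0}=1$); for $\mathbf k=(1^{s_0},t_1+2,1^{s_1},\dots,t_r+2,1^{s_r})$ (unique form, $1^s$ = $s$ ones), $E_{\mathbf k}=E_{1^{s_0}}e_{t_1+2}E_{1^{s_1}}\cdots e_{t_r+2}E_{1^{s_r}}$, $E_\varnothing=1$. *)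

theory Defs
  imports "HOL-Library.Poly_Mapping" "HOL-Computational_Algebra.Polynomial"
begin

datatype letter = La | Lb

type_synonym coef = "rat poly"
type_synonym nc = "letter list \<Rightarrow>\<^sub>0 coef"   (* element of H: finitely supported word -> coefficient *)

definition hbar :: coef where "hbar = [:0, 1:]"

definition mono :: "letter list \<Rightarrow> nc" where "mono w = Poly_Mapping.single w 1"
definition cst :: "coef \<Rightarrow> nc" where "cst c = Poly_Mapping.single [] c"
definition ncone :: nc where "ncone = mono []"

definition ncmul :: "nc \<Rightarrow> nc \<Rightarrow> nc" (infixl "\<cdot>" 70) where
  "ncmul p q = (\<Sum>u\<in>Poly_Mapping.keys p. \<Sum>v\<in>Poly_Mapping.keys q. Poly_Mapping.single (u @ v) (Poly_Mapping.lookup p u * Poly_Mapping.lookup q v))"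

fun ncpow :: "nc \<Rightarrow> nat \<Rightarrow> nc" where
  "ncpow p 0 = ncone"
| "ncpow p (Suc n) = p \<cdot> ncpow p n"

definition prodl :: "nc list \<Rightarrow> nc" where "prodl xs = foldr ncmul xs ncone"

definition rmul :: "nc \<Rightarrow> letter \<Rightarrow> nc" where "rmul p l = p \<cdot> mono [l]"

(* shr works on reversed words: head of the list = last letter *)
function (sequential) shr :: "letter list \<Rightarrow> letter list \<Rightarrow> nc" where
  "shr [] ys = mono (rev ys)"
| "shr xs [] = mono (rev xs)"
| "shr (Lb # xs) ys = rmul (shr xs ys) Lb"
| "shr (La # xs) (Lb # ys) = rmul (shr (La # xs) ys) Lb"
| "shr (La # xs) (La # ys) =
     rmul (shr (La # xs) ys + shr xs (La # ys) + cst hbar \<cdot> shr xs ys) La"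
  by pat_completeness auto
termination by (relation "measure (\<lambda>(xs, ys). length xs + length ys)") auto

definition shw :: "letter list \<Rightarrow> letter list \<Rightarrow> nc" where
  "shw u v = shr (rev u) (rev v)"

definition sh :: "nc \<Rightarrow> nc \<Rightarrow> nc" where
  "sh p q = (\<Sum>u\<in>Poly_Mapping.keys p. \<Sum>v\<in>Poly_Mapping.keys q. cst (Poly_Mapping.lookup p u * Poly_Mapping.lookup q v) \<cdot> shw u v)"

fun shpow :: "nc \<Rightarrow> nat \<Rightarrow> nc" where
  "shpow p 0 = ncone"
| "shpow p (Suc n) = sh p (shpow p n)"

definition g :: "nat \<Rightarrow> nc" where "g k = mono (Lb # replicate k La)"
definition e :: "nat \<Rightarrow> nc" where
  "e k = mono [Lb] \<cdot> (mono [La] + cst hbar) \<cdot> mono (replicate (k - 1) La)"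

definition gidx :: "nat list \<Rightarrow> nc" where "gidx ks = prodl (map g ks)"

definition admissible :: "nat list \<Rightarrow> bool" where
  "admissible ks \<longleftrightarrow> (\<forall>k\<in>set ks. 1 \<le> k) \<and> (ks = [] \<or> 2 \<le> last ks)"

definition E1 :: "nat \<Rightarrow> nc" where
  "E1 m = cst [: inverse (fact (Suc m)) :] \<cdot>
          (\<Sum>j\<le>m. sh (shpow (g 1) j) (shpow (e 1) (m - j)))"

(* Eaux s ks: s = number of pending leading 1's; realises the unique decomposition
   k = (1^{s0}, t1+2, 1^{s1}, ..., tr+2, 1^{sr}) *)
fun Eaux :: "nat \<Rightarrow> nat list \<Rightarrow> nc" where
  "Eaux s [] = E1 s"
| "Eaux s (k # ks) = (if k = 1 then Eaux (Suc s) ks else E1 s \<cdot> e k \<cdot> Eaux 0 ks)"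

definition Eidx :: "nat list \<Rightarrow> nc" where "Eidx ks = Eaux 0 ks"

inductive_set cspan :: "nc set \<Rightarrow> nc set" for S where
  zero: "0 \<in> cspan S"
| gen: "x \<in> S \<Longrightarrow> cst c \<cdot> x \<in> cspan S"
| add: "x \<in> cspan S \<Longrightarrow> y \<in> cspan S \<Longrightarrow> x + y \<in> cspan S"

definition hb :: nc where "hb = cst hbar \<cdot> mono [Lb]"

definition Aset :: "nc set" where "Aset = {hb} \<union> {g k | k. 1 \<le> k}"

definition CA :: "nc set" where "CA = cspan {prodl xs | xs. set xs \<subseteq> Aset}"

definition H0hat :: "nc set" where
  "H0hat = cspan ({ncone} \<union> {x \<cdot> g k | x k. x \<in> CA \<and> 1 \<le> k})"

definition n0gen :: "nat list \<Rightarrow> nat list \<Rightarrow> nc" where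
  "n0gen al be = prodl (concat (map (\<lambda>i. [ncpow hb (al ! i), g (be ! i + 1)]) [0..<length al]))"

definition frak_n0 :: "nc set" where
  "frak_n0 = cspan {n0gen al be | al be. length al = length be \<and> 1 \<le> length al \<and>
      (\<exists>s t. s \<le> t \<and> t < length al \<and> 1 \<le> al ! s \<and> 1 \<le> be ! t)}"

definition frak_n :: "nc set" where
  "frak_n = {x + cst hbar \<cdot> y | x y. x \<in> frak_n0 \<and> y \<in> H0hat}"

section \<open>Formal power series in a central variable X: coefficient sequences\<close>

type_synonym ser = "nat \<Rightarrow> nc"

definition smul :: "ser \<Rightarrow> ser \<Rightarrow> ser" where
  "smul F G n = (\<Sum>i\<le>n. F i \<cdot> G (n - i))"

definition ssh :: "ser \<Rightarrow> ser \<Rightarrow> ser" where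
  "ssh F G n = (\<Sum>i\<le>n. sh (F i) (G (n - i)))"

definition sone :: ser where "sone n = (if n = 0 then ncone else 0)"

fun spow :: "ser \<Rightarrow> nat \<Rightarrow> ser" where
  "spow F 0 = sone"
| "spow F (Suc m) = smul F (spow F m)"

(* 1/(1-F) = sum_m F^m, for F without constant term: only m <= n contribute to X^n *)
definition geom :: "ser \<Rightarrow> ser" where
  "geom F n = (\<Sum>m\<le>n. spow F m n)"

definition Rser :: ser where
  "Rser n = (if n = 0 then 0 else cst [: inverse (fact n) :] \<cdot> ncpow (e 1 - g 1) (n - 1))"

definition RG :: ser where "RG n = Rser n \<cdot> g 1"

definition GX :: ser where "GX n = (if n = 1 then g 1 else 0)"

end

theory Submission
  imports Defs
begin


abbreviation lk :: "nc \<Rightarrow> letter list \<Rightarrow> coef" where "lk \<equiv> Poly_Mapping.lookup"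
abbreviation kz :: "nc \<Rightarrow> letter list set" where "kz \<equiv> Poly_Mapping.keys"
abbreviation sg :: "letter list \<Rightarrow> coef \<Rightarrow> nc" where "sg \<equiv> Poly_Mapping.single"

lemma nc_expand: "p = (\<Sum>u\<in>kz p. sg u (lk p u))"
  by (rule poly_mapping_eqI) (simp add: lookup_sum lookup_single when_def in_keys_iff)

lemma lookup_ncmul: "lk (p \<cdot> q) t = (\<Sum>u\<in>kz p. \<Sum>v\<in>kz q. if u @ v = t then lk p u * lk q v else 0)"
  by (simp add: ncmul_def lookup_sum lookup_single when_def)

lemma ncmul_sup:
  assumes "finite S" "finite T" "kz p \<subseteq> S" "kz q \<subseteq> T"
  shows "p \<cdot> q = (\<Sum>u\<in>S. \<Sum>v\<in>T. sg (u @ v) (lk p u * lk q v))"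
proof -
  have "(\<Sum>u\<in>S. \<Sum>v\<in>T. sg (u @ v) (lk p u * lk q v)) = (\<Sum>u\<in>kz p. \<Sum>v\<in>T. sg (u @ v) (lk p u * lk q v))"
    by (rule sum.mono_neutral_right) (use assms in \<open>auto simp: in_keys_iff\<close>)
  also have "\<dots> = (\<Sum>u\<in>kz p. \<Sum>v\<in>kz q. sg (u @ v) (lk p u * lk q v))"
    by (rule sum.cong[OF refl], rule sum.mono_neutral_right) (use assms in \<open>auto simp: in_keys_iff\<close>)
  finally show ?thesis by (simp add: ncmul_def)
qed

lemma ncmul_add_left: "(p + q) \<cdot> r = p \<cdot> r + q \<cdot> r"
proof -
  let ?S = "kz p \<union> kz q"
  have k: "kz (p + q) \<subseteq> ?S" by (rule keys_add)
  show ?thesis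
    by (subst (1 2 3) ncmul_sup[where S="?S" and T="kz r"])
       (use k in \<open>auto simp: lookup_add distrib_right single_add sum.distrib\<close>)
qed

lemma ncmul_add_right: "r \<cdot> (p + q) = r \<cdot> p + r \<cdot> q"
proof -
  let ?S = "kz p \<union> kz q"
  have k: "kz (p + q) \<subseteq> ?S" by (rule keys_add)
  show ?thesis
    by (subst (1 2 3) ncmul_sup[where T="?S" and S="kz r"])
       (use k in \<open>auto simp: lookup_add distrib_left single_add sum.distrib\<close>)
qed

lemma ncmul_zero_left[simp]: "0 \<cdot> p = 0" by (simp add: ncmul_def)
lemma ncmul_zero_right[simp]: "p \<cdot> 0 = 0" by (simp add: ncmul_def)

lemma ncmul_sum_left: "(\<Sum>i\<in>I. f i) \<cdot> q = (\<Sum>i\<in>I. f i \<cdot> q)"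
  by (induction I rule: infinite_finite_induct) (auto simp: ncmul_add_left)
lemma ncmul_sum_right: "q \<cdot> (\<Sum>i\<in>I. f i) = (\<Sum>i\<in>I. q \<cdot> f i)"
  by (induction I rule: infinite_finite_induct) (auto simp: ncmul_add_right)

lemma ncmul_uminus_left: "(- p) \<cdot> q = - (p \<cdot> q)"
  using ncmul_add_left[of "-p" p q] by (simp add: eq_neg_iff_add_eq_0)
lemma ncmul_uminus_right: "q \<cdot> (- p) = - (q \<cdot> p)"
  using ncmul_add_right[of q "-p" p] by (simp add: eq_neg_iff_add_eq_0)
lemma ncmul_diff_left: "(p - q) \<cdot> r = p \<cdot> r - q \<cdot> r"
  using ncmul_add_left[of p "-q" r] by (simp add: ncmul_uminus_left)
lemma ncmul_diff_right: "r \<cdot> (p - q) = r \<cdot> p - r \<cdot> q"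
  using ncmul_add_right[of r p "-q"] by (simp add: ncmul_uminus_right)

lemma single_mult: "sg u c \<cdot> sg v d = sg (u @ v) (c * d)"
  by (subst ncmul_sup[where S="{u}" and T="{v}"]) auto

lemma ncmul_assoc: "(p \<cdot> q) \<cdot> r = p \<cdot> (q \<cdot> r)"
proof -
  have "(p \<cdot> q) \<cdot> r = ((\<Sum>u\<in>kz p. sg u (lk p u)) \<cdot> (\<Sum>u\<in>kz q. sg u (lk q u))) \<cdot> (\<Sum>u\<in>kz r. sg u (lk r u))"
    by (simp only: nc_expand[symmetric])
  also have "\<dots> = (\<Sum>w\<in>kz r. \<Sum>v\<in>kz q. \<Sum>u\<in>kz p. sg (u @ v @ w) (lk p u * (lk q v * lk r w)))"
    by (simp add: ncmul_sum_left ncmul_sum_right single_mult mult.assoc)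
  also have "\<dots> = (\<Sum>u\<in>kz p. sg u (lk p u)) \<cdot> ((\<Sum>u\<in>kz q. sg u (lk q u)) \<cdot> (\<Sum>u\<in>kz r. sg u (lk r u)))"
    by (simp add: ncmul_sum_left ncmul_sum_right single_mult mult.assoc)
  also have "\<dots> = p \<cdot> (q \<cdot> r)" by (simp only: nc_expand[symmetric])
  finally show ?thesis .
qed

lemma mono_sg: "mono w = sg w 1" by (simp add: mono_def)
lemma cst_sg: "cst c = sg [] c" by (simp add: cst_def)
lemma ncone_sg: "ncone = sg [] 1" by (simp add: ncone_def mono_def)

lemma cst_mult_expand: "cst c \<cdot> x = (\<Sum>v\<in>kz x. sg v (c * lk x v))"
  by (subst ncmul_sup[where S="{[]}" and T="kz x"]) (auto simp: cst_def)

lemma mult_cst_expand: "x \<cdot> cst c = (\<Sum>v\<in>kz x. sg v (lk x v * c))"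
  by (subst ncmul_sup[where T="{[]}" and S="kz x"]) (auto simp: cst_def)

lemma lookup_cst_mult: "lk (cst c \<cdot> x) t = c * lk x t"
  by (simp add: cst_mult_expand lookup_sum lookup_single when_def sum.delta' in_keys_iff)

lemma lookup_mult_cst: "lk (x \<cdot> cst c) t = lk x t * c"
  by (simp add: mult_cst_expand lookup_sum lookup_single when_def sum.delta' in_keys_iff)

lemma cst_mult_comm: "x \<cdot> cst c = cst c \<cdot> x"
  by (rule poly_mapping_eqI) (simp add: lookup_cst_mult lookup_mult_cst mult.commute)

lemma cst_mult_right: "x \<cdot> (cst c \<cdot> y) = cst c \<cdot> (x \<cdot> y)"
  by (metis cst_mult_comm ncmul_assoc)

lemma cst_cst: "cst c \<cdot> (cst d \<cdot> x) = cst (c * d) \<cdot> x"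
  by (rule poly_mapping_eqI) (simp add: lookup_cst_mult mult.assoc)

lemma cst_one[simp]: "cst 1 \<cdot> x = x"
  by (rule poly_mapping_eqI) (simp add: lookup_cst_mult)
lemma cst_zero[simp]: "cst 0 \<cdot> x = 0"
  by (rule poly_mapping_eqI) (simp add: lookup_cst_mult)
lemma cst_add: "cst (c + d) \<cdot> x = cst c \<cdot> x + cst d \<cdot> x"
  by (rule poly_mapping_eqI) (simp add: lookup_cst_mult lookup_add distrib_right)
lemma ncone_left[simp]: "ncone \<cdot> x = x"
  using cst_one by (simp add: ncone_sg cst_sg)
lemma ncone_right[simp]: "x \<cdot> ncone = x"
  by (metis cst_mult_comm cst_one cst_sg ncone_sg)

lemma cst_mono: "cst c \<cdot> mono w = sg w c"
  by (rule poly_mapping_eqI) (simp add: lookup_cst_mult mono_def lookup_single when_def)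

lemma mono_app: "mono (u @ v) = mono u \<cdot> mono v"
  by (simp add: mono_sg single_mult)

lemma rmul_mono: "rmul (mono u) l = mono (u @ [l])"
  by (simp add: rmul_def mono_app)

lemma lookup_rmul_snoc: "lk (rmul p l) (t @ [l]) = lk p t"
  by (simp add: rmul_def lookup_ncmul mono_def lookup_single when_def in_keys_iff sum.delta' cong: if_cong)


lemma shr_nil2: "shr xs [] = mono (rev xs)" by (cases xs) auto

lemma shr_Lb1: "shr (Lb # xs) ys = rmul (shr xs ys) Lb"
  by (cases ys) (auto simp: shr_nil2 rmul_mono)

lemma shr_Lb2: "shr xs (Lb # ys) = rmul (shr xs ys) Lb"
proof (induction xs)
  case Nil then show ?case by (simp add: rmul_mono)
next
  case (Cons x xs) then show ?case by (cases x) (auto simp: shr_Lb1)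
qed

lemma shr_comm: "shr xs ys = shr ys xs"
proof (induction xs ys rule: shr.induct)
  case (1 ys)
  then show ?case by (simp add: shr_nil2)
next
  case (2 v va)
  then show ?case by (simp add: shr_nil2)
next
  case (3 xs v va)
  then show ?case by (simp only: shr_Lb1 shr_Lb2)
next
  case (4 xs ys)
  then show ?case by (simp only: shr_Lb1 shr_Lb2)
next
  case (5 xs ys)
  then show ?case by (simp only: shr.simps) (simp add: add_ac)
qed

lemma shw_comm: "shw u v = shw v u" by (simp add: shw_def shr_comm)
lemma shw_nil1[simp]: "shw [] v = mono v" by (simp add: shw_def)
lemma shw_nil2[simp]: "shw u [] = mono u" by (simp add: shw_def shr_nil2)
lemma shw_b1: "shw (u @ [Lb]) v = rmul (shw u v) Lb" by (simp add: shw_def shr_Lb1)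
lemma shw_b2: "shw u (v @ [Lb]) = rmul (shw u v) Lb" by (simp add: shw_def shr_Lb2)
lemma shw_aa: "shw (u @ [La]) (v @ [La]) = rmul (shw (u @ [La]) v + shw u (v @ [La]) + cst hbar \<cdot> shw u v) La"
  by (simp add: shw_def)

lemma sh_sup:
  assumes "finite S" "finite T" "kz p \<subseteq> S" "kz q \<subseteq> T"
  shows "sh p q = (\<Sum>u\<in>S. \<Sum>v\<in>T. cst (lk p u * lk q v) \<cdot> shw u v)"
proof -
  have "(\<Sum>u\<in>S. \<Sum>v\<in>T. cst (lk p u * lk q v) \<cdot> shw u v) = (\<Sum>u\<in>kz p. \<Sum>v\<in>T. cst (lk p u * lk q v) \<cdot> shw u v)"
    by (rule sum.mono_neutral_right) (use assms in \<open>auto simp: in_keys_iff\<close>)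
  also have "\<dots> = (\<Sum>u\<in>kz p. \<Sum>v\<in>kz q. cst (lk p u * lk q v) \<cdot> shw u v)"
    by (rule sum.cong[OF refl], rule sum.mono_neutral_right) (use assms in \<open>auto simp: in_keys_iff\<close>)
  finally show ?thesis by (simp add: sh_def)
qed

lemma sh_add_left: "sh (p + q) r = sh p r + sh q r"
proof -
  let ?S = "kz p \<union> kz q"
  have k: "kz (p + q) \<subseteq> ?S" by (rule keys_add)
  show ?thesis
    by (subst (1 2 3) sh_sup[where S="?S" and T="kz r"])
       (use k in \<open>auto simp: lookup_add distrib_right cst_add sum.distrib\<close>)
qed

lemma sh_add_right: "sh r (p + q) = sh r p + sh r q"
proof -
  let ?S = "kz p \<union> kz q"
  have k: "kz (p + q) \<subseteq> ?S" by (rule keys_add)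
  show ?thesis
    by (subst (1 2 3) sh_sup[where T="?S" and S="kz r"])
       (use k in \<open>auto simp: lookup_add distrib_left cst_add sum.distrib\<close>)
qed

lemma sh_zero_left[simp]: "sh 0 p = 0" by (simp add: sh_def)
lemma sh_zero_right[simp]: "sh p 0 = 0" by (simp add: sh_def)

lemma sh_sum_left: "sh (\<Sum>i\<in>I. f i) q = (\<Sum>i\<in>I. sh (f i) q)"
  by (induction I rule: infinite_finite_induct) (auto simp: sh_add_left)
lemma sh_sum_right: "sh q (\<Sum>i\<in>I. f i) = (\<Sum>i\<in>I. sh q (f i))"
  by (induction I rule: infinite_finite_induct) (auto simp: sh_add_right)

lemma sh_uminus_left: "sh (- p) q = - sh p q"
  using sh_add_left[of "-p" p q] by (simp add: eq_neg_iff_add_eq_0)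
lemma sh_uminus_right: "sh q (- p) = - sh q p"
  using sh_add_right[of q "-p" p] by (simp add: eq_neg_iff_add_eq_0)
lemma sh_diff_left: "sh (p - q) r = sh p r - sh q r"
  using sh_add_left[of p "-q" r] by (simp add: sh_uminus_left)
lemma sh_diff_right: "sh r (p - q) = sh r p - sh r q"
  using sh_add_right[of r p "-q"] by (simp add: sh_uminus_right)

lemma cst_sum: "cst c \<cdot> (\<Sum>i\<in>I. f i) = (\<Sum>i\<in>I. cst c \<cdot> f i)"
  by (rule ncmul_sum_right)

lemma keys_cst_mult: "kz (cst c \<cdot> p) \<subseteq> kz p"
  by (auto simp: in_keys_iff lookup_cst_mult)

lemma sh_cst_left: "sh (cst c \<cdot> p) q = cst c \<cdot> sh p q"
  by (subst (1 2) sh_sup[where S="kz p" and T="kz q"])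
     (auto simp: keys_cst_mult lookup_cst_mult cst_sum cst_cst mult.assoc)

lemma sh_cst_right: "sh p (cst c \<cdot> q) = cst c \<cdot> sh p q"
  by (subst (1 2) sh_sup[where S="kz p" and T="kz q"])
     (auto simp: keys_cst_mult lookup_cst_mult cst_sum cst_cst mult.assoc mult.left_commute)

lemma sh_comm: "sh p q = sh q p"
  unfolding sh_def by (subst sum.swap) (simp add: shw_comm mult.commute)

lemma sh_single: "sh (sg u c) (sg v d) = cst (c * d) \<cdot> shw u v"
  by (subst sh_sup[where S="{u}" and T="{v}"]) auto

lemma sh_mono: "sh (mono u) (mono v) = shw u v"
  by (simp add: mono_sg sh_single)

lemma sh_ncone_left[simp]: "sh ncone x = x"
proof -
  have "sh ncone x = (\<Sum>v\<in>kz x. cst (lk x v) \<cdot> mono v)"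
    by (subst sh_sup[where S="{[]}" and T="kz x"]) (auto simp: ncone_sg)
  also have "\<dots> = x" by (simp add: cst_mono nc_expand[symmetric])
  finally show ?thesis .
qed

lemma sh_ncone_right[simp]: "sh x ncone = x"
  using sh_ncone_left sh_comm by metis

lemma rmul_expand: "rmul p l = (\<Sum>u\<in>kz p. sg (u @ [l]) (lk p u))"
  by (simp add: rmul_def mono_sg, subst ncmul_sup[where S="kz p" and T="{[l]}"]) auto

lemma keys_rmul: "kz (rmul p l) \<subseteq> (\<lambda>u. u @ [l]) ` kz p"
proof
  fix t assume "t \<in> kz (rmul p l)"
  then have "lk (rmul p l) t \<noteq> 0" by (simp add: in_keys_iff)
  then obtain u where "u \<in> kz p" "u @ [l] = t"
    by (auto simp: rmul_expand lookup_sum lookup_single when_def intro: ccontr elim!: sum.not_neutral_contains_not_neutral split: if_splits)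
  then show "t \<in> (\<lambda>u. u @ [l]) ` kz p" by auto
qed

lemma lookup_rmul: "lk (rmul p l) (u @ [l]) = lk p u"
  by (simp add: rmul_expand lookup_sum lookup_single when_def in_keys_iff sum.delta' cong: if_cong)

lemma rmul_add: "rmul (p + q) l = rmul p l + rmul q l" by (simp add: rmul_def ncmul_add_left)
lemma rmul_diff: "rmul (p - q) l = rmul p l - rmul q l" by (simp add: rmul_def ncmul_diff_left)
lemma rmul_uminus: "rmul (- p) l = - rmul p l" by (simp add: rmul_def ncmul_uminus_left)
lemma rmul_zero[simp]: "rmul 0 l = 0" by (simp add: rmul_def)
lemma rmul_sum: "rmul (\<Sum>i\<in>I. f i) l = (\<Sum>i\<in>I. rmul (f i) l)" by (simp add: rmul_def ncmul_sum_left)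
lemma rmul_cst: "rmul (cst c \<cdot> p) l = cst c \<cdot> rmul p l" by (simp add: rmul_def ncmul_assoc)

lemma sh_rmul_left_expand:
  "sh (rmul x l) y = (\<Sum>u\<in>kz x. \<Sum>v\<in>kz y. cst (lk x u * lk y v) \<cdot> shw (u @ [l]) v)"
proof -
  have "sh (rmul x l) y = (\<Sum>u\<in>(\<lambda>u. u @ [l]) ` kz x. \<Sum>v\<in>kz y. cst (lk (rmul x l) u * lk y v) \<cdot> shw u v)"
    by (rule sh_sup) (auto simp: keys_rmul)
  also have "\<dots> = (\<Sum>u\<in>kz x. \<Sum>v\<in>kz y. cst (lk x u * lk y v) \<cdot> shw (u @ [l]) v)"
    by (subst sum.reindex) (auto simp: inj_on_def lookup_rmul)
  finally show ?thesis .
qed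

lemma sh_rmul_right_expand:
  "sh x (rmul y l) = (\<Sum>u\<in>kz x. \<Sum>v\<in>kz y. cst (lk x u * lk y v) \<cdot> shw u (v @ [l]))"
proof -
  have "sh x (rmul y l) = (\<Sum>u\<in>kz x. \<Sum>v\<in>(\<lambda>u. u @ [l]) ` kz y. cst (lk x u * lk (rmul y l) v) \<cdot> shw u v)"
    by (rule sh_sup) (auto simp: keys_rmul)
  also have "\<dots> = (\<Sum>u\<in>kz x. \<Sum>v\<in>kz y. cst (lk x u * lk y v) \<cdot> shw u (v @ [l]))"
    by (rule sum.cong[OF refl], subst sum.reindex) (auto simp: inj_on_def lookup_rmul)
  finally show ?thesis .
qed

lemma sh_rmul_both_expand:
  "sh (rmul x l) (rmul y l') = (\<Sum>u\<in>kz x. \<Sum>v\<in>kz y. cst (lk x u * lk y v) \<cdot> shw (u @ [l]) (v @ [l']))"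
proof -
  have "sh (rmul x l) (rmul y l') = (\<Sum>u\<in>(\<lambda>u. u @ [l]) ` kz x. \<Sum>v\<in>(\<lambda>u. u @ [l']) ` kz y. cst (lk (rmul x l) u * lk (rmul y l') v) \<cdot> shw u v)"
    by (rule sh_sup) (auto simp: keys_rmul)
  also have "\<dots> = (\<Sum>u\<in>kz x. \<Sum>v\<in>kz y. cst (lk x u * lk y v) \<cdot> shw (u @ [l]) (v @ [l']))"
    by (subst sum.reindex, simp add: inj_on_def, rule sum.cong[OF refl], subst sum.reindex) (auto simp: inj_on_def lookup_rmul)
  finally show ?thesis .
qed

lemma sh_expand: "sh x y = (\<Sum>u\<in>kz x. \<Sum>v\<in>kz y. cst (lk x u * lk y v) \<cdot> shw u v)"
  by (simp add: sh_def)

lemma sh_pb_left: "sh (rmul x Lb) y = rmul (sh x y) Lb"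
  by (simp only: sh_rmul_left_expand shw_b1) (simp add: sh_rmul_left_expand sh_expand shw_b1 rmul_sum rmul_cst)

lemma sh_pb_right: "sh x (rmul y Lb) = rmul (sh x y) Lb"
  by (simp only: sh_rmul_right_expand shw_b2) (simp add: sh_rmul_right_expand sh_expand shw_b2 rmul_sum rmul_cst)

lemma cst_swap: "cst c \<cdot> (cst d \<cdot> z) = cst d \<cdot> (cst c \<cdot> z)"
  by (simp add: cst_cst mult.commute)

lemma sh_pa_pa: "sh (rmul x La) (rmul y La) = rmul (sh (rmul x La) y + sh x (rmul y La) + cst hbar \<cdot> sh x y) La"
  apply (subst sh_rmul_both_expand)
  apply (simp only: shw_aa)
  apply (subst sh_rmul_left_expand)
  apply (subst sh_rmul_right_expand)
  apply (simp only: rmul_add rmul_sum rmul_cst ncmul_add_right sum.distrib cst_sum sh_expand)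
  apply (simp only: cst_swap)
  done

lemma rmul_assoc: "rmul (x \<cdot> y) l = x \<cdot> rmul y l" by (simp add: rmul_def ncmul_assoc)

lemma mono_nil: "mono [] = ncone" by (simp add: ncone_def)

lemma mult_rep_b_Suc: "x \<cdot> mono (replicate (Suc n) Lb) = rmul (x \<cdot> mono (replicate n Lb)) Lb"
proof -
  have "replicate (Suc n) Lb = replicate n Lb @ [Lb]" by (simp add: replicate_append_same)
  then show ?thesis by (simp add: rmul_def ncmul_assoc mono_app del: replicate_Suc)
qed

lemma sh_repb_left: "sh (x \<cdot> mono (replicate n Lb)) y = sh x y \<cdot> mono (replicate n Lb)"
proof (induction n)
  case 0 then show ?case by (simp add: mono_nil)
next
  case (Suc n) then show ?case by (simp only: mult_rep_b_Suc sh_pb_left)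
qed

lemma sh_repb_right: "sh y (x \<cdot> mono (replicate n Lb)) = sh y x \<cdot> mono (replicate n Lb)"
proof (induction n)
  case 0 then show ?case by (simp add: mono_nil)
next
  case (Suc n) then show ?case by (simp only: mult_rep_b_Suc sh_pb_right)
qed


definition inS :: "(nat \<Rightarrow> letter list \<Rightarrow> bool) \<Rightarrow> nc \<Rightarrow> bool" where
  "inS Q x \<longleftrightarrow> (\<forall>t j. coeff (lk x t) j \<noteq> 0 \<longrightarrow> Q j t)"

lemma inS_zero[simp]: "inS Q 0" by (simp add: inS_def)

lemma inS_add: "inS Q x \<Longrightarrow> inS Q y \<Longrightarrow> inS Q (x + y)"
  unfolding inS_def by (metis add.right_neutral coeff_add lookup_add)

lemma inS_uminus: "inS Q x \<Longrightarrow> inS Q (- x)"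
  by (auto simp: inS_def)

lemma inS_diff: "inS Q x \<Longrightarrow> inS Q y \<Longrightarrow> inS Q (x - y)"
  unfolding inS_def by (metis coeff_diff diff_self lookup_minus right_minus_eq)

lemma coeff_sum_nz: "coeff (\<Sum>i\<in>I. f i) n \<noteq> 0 \<Longrightarrow> \<exists>i\<in>I. coeff (f i) n \<noteq> 0"
  by (metis (mono_tags, lifting) coeff_sum sum.neutral)

lemma inS_sum: "(\<And>i. i \<in> I \<Longrightarrow> inS Q (f i)) \<Longrightarrow> inS Q (\<Sum>i\<in>I. f i)"
  unfolding inS_def by (auto simp: lookup_sum dest!: coeff_sum_nz)

lemma inS_weaken: "inS Q x \<Longrightarrow> (\<And>j t. Q j t \<Longrightarrow> Q' j t) \<Longrightarrow> inS Q' x"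
  by (auto simp: inS_def)

lemma coeff_mult_nz: "coeff (p * q) n \<noteq> 0 \<Longrightarrow> \<exists>i k. i + k = n \<and> coeff p i \<noteq> 0 \<and> coeff q k \<noteq> 0"
proof -
  assume "coeff (p * q) n \<noteq> 0"
  then have "(\<Sum>i\<le>n. coeff p i * coeff q (n - i)) \<noteq> 0" by (simp add: coeff_mult)
  then obtain i where "i \<le> n" "coeff p i * coeff q (n - i) \<noteq> 0"
    by (metis (no_types, lifting) sum.neutral atMost_iff)
  then show ?thesis by (intro exI[of _ i] exI[of _ "n - i"]) auto
qed

lemma inS_cst:
  assumes "inS Q x" "\<And>i j t. coeff c i \<noteq> 0 \<Longrightarrow> Q j t \<Longrightarrow> Q' (i + j) t"
  shows "inS Q' (cst c \<cdot> x)"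
  using assms unfolding inS_def by (auto simp: lookup_cst_mult dest!: coeff_mult_nz)

lemma inS_cst_const: "inS Q x \<Longrightarrow> inS Q (cst [:r:] \<cdot> x)"
  by (erule inS_cst) (auto simp: coeff_pCons split: nat.splits)

lemma inS_mult:
  assumes "inS Q1 x" "inS Q2 y" "\<And>j1 u j2 v. Q1 j1 u \<Longrightarrow> Q2 j2 v \<Longrightarrow> Q3 (j1 + j2) (u @ v)"
  shows "inS Q3 (x \<cdot> y)"
  unfolding inS_def
proof (intro allI impI)
  fix t j assume "coeff (lk (x \<cdot> y) t) j \<noteq> 0"
  then have "coeff (\<Sum>u\<in>kz x. \<Sum>v\<in>kz y. if u @ v = t then lk x u * lk y v else 0) j \<noteq> 0"
    by (simp add: lookup_ncmul)
  then obtain u v where "u @ v = t" "coeff (lk x u * lk y v) j \<noteq> 0"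
    by (auto dest!: coeff_sum_nz split: if_splits)
  then show "Q3 j t" using assms unfolding inS_def by (auto dest!: coeff_mult_nz)
qed

lemma inS_sg: "(\<And>j. coeff c j \<noteq> 0 \<Longrightarrow> Q j w) \<Longrightarrow> inS Q (sg w c)"
  by (auto simp: inS_def lookup_single when_def split: if_splits)

lemma inS_mono: "Q 0 w \<Longrightarrow> inS Q (mono w)"
  by (auto simp: mono_sg intro!: inS_sg simp: coeff_1 split: if_splits)

lemma inS_mult_mono:
  assumes "inS Q x" "\<And>j t. Q j t \<Longrightarrow> Q' j (t @ w)"
  shows "inS Q' (x \<cdot> mono w)"
  by (rule inS_mult[OF assms(1) inS_mono[of "\<lambda>j v. j = 0 \<and> v = w"]]) (auto intro: assms(2))

lemma inS_rmul:
  assumes "inS Q x" "\<And>j t. Q j t \<Longrightarrow> Q' j (t @ [l])"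
  shows "inS Q' (rmul x l)"
  unfolding rmul_def by (rule inS_mult_mono[where Q=Q, OF assms(1)]) (rule assms(2))

lemma inS_sh:
  assumes "inS Q1 x" "inS Q2 y"
    "\<And>j1 u j2 v m t. Q1 j1 u \<Longrightarrow> Q2 j2 v \<Longrightarrow> coeff (lk (shw u v) t) m \<noteq> 0 \<Longrightarrow> Q3 (j1 + j2 + m) t"
  shows "inS Q3 (sh x y)"
  unfolding inS_def
proof (intro allI impI)
  fix t j assume "coeff (lk (sh x y) t) j \<noteq> 0"
  then have "coeff (\<Sum>u\<in>kz x. \<Sum>v\<in>kz y. (lk x u * lk y v) * lk (shw u v) t) j \<noteq> 0"
    by (simp add: sh_expand lookup_sum lookup_cst_mult)
  then obtain u v where "coeff ((lk x u * lk y v) * lk (shw u v) t) j \<noteq> 0"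
    by (auto dest!: coeff_sum_nz)
  then obtain i m where im: "i + m = j" "coeff (lk x u * lk y v) i \<noteq> 0" "coeff (lk (shw u v) t) m \<noteq> 0"
    by (meson coeff_mult_nz)
  from im(2) obtain j1 j2 where "j1 + j2 = i" "coeff (lk x u) j1 \<noteq> 0" "coeff (lk y v) j2 \<noteq> 0"
    by (meson coeff_mult_nz)
  then show "Q3 j t" using assms im unfolding inS_def by blast
qed

fun sfun :: "letter list \<Rightarrow> nat" where
  "sfun [] = 0"
| "sfun [Lb] = 1"
| "sfun (Lb # Lb # w) = Suc (sfun (Lb # w))"
| "sfun (Lb # La # w) = sfun (La # w)"
| "sfun (La # w) = sfun w"

definition endb :: "letter list \<Rightarrow> bool" where "endb w \<longleftrightarrow> w \<noteq> [] \<and> last w = Lb"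

lemma sfun_snoc_b: "sfun (w @ [Lb]) = Suc (sfun w)"
  by (induction w rule: sfun.induct) auto

lemma sfun_snoc_a: "sfun (w @ [La]) + (if endb w then 1 else 0) = sfun w"
  by (induction w rule: sfun.induct) (auto simp: endb_def)

lemma sfun_append: "v = [] \<or> hd v = Lb \<Longrightarrow> sfun (u @ v) = sfun u + sfun v"
proof (induction u rule: sfun.induct)
  case 2 then show ?case by (cases v) auto
next
  case (3 w) then show ?case by auto
next
  case (4 w) then show ?case by auto
next
  case (5 w) then show ?case by (cases w) auto
qed auto

definition Inv :: "nat \<Rightarrow> letter list \<Rightarrow> letter list \<Rightarrow> letter list \<Rightarrow> bool" where
  "Inv m t u v \<longleftrightarrow> sfun t \<le> sfun u + sfun v + m \<and> (endb t \<longleftrightarrow> endb u \<or> endb v) \<and>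
     (t = [] \<longleftrightarrow> u = [] \<and> v = []) \<and>
     ((u = [] \<or> hd u = Lb) \<and> (v = [] \<or> hd v = Lb) \<longrightarrow> t = [] \<or> hd t = Lb)"

lemma coeff_rmul_nz:
  assumes "coeff (lk (rmul p l) t) m \<noteq> 0"
  obtains t' where "t = t' @ [l]" "coeff (lk p t') m \<noteq> 0"
proof -
  have "lk (rmul p l) t \<noteq> 0" using assms by auto
  then have "t \<in> kz (rmul p l)" by (simp add: in_keys_iff)
  then obtain t' where "t = t' @ [l]" using keys_rmul by blast
  with assms that show ?thesis by (simp add: lookup_rmul)
qed

lemma coeff_mono_nz: "coeff (lk (mono w) t) m \<noteq> 0 \<Longrightarrow> t = w \<and> m = 0"
  by (auto simp: mono_def lookup_single when_def coeff_1 split: if_splits)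

lemma coeff_hbar_nz: "coeff (hbar * c) m \<noteq> 0 \<Longrightarrow> m \<ge> 1 \<and> coeff c (m - 1) \<noteq> 0"
proof -
  have "hbar * c = pCons 0 c" by (simp add: hbar_def)
  then show "coeff (hbar * c) m \<noteq> 0 \<Longrightarrow> m \<ge> 1 \<and> coeff c (m - 1) \<noteq> 0"
    by (cases m) auto
qed

lemma coeff_add_nz: "coeff (a + b) m \<noteq> 0 \<Longrightarrow> coeff a m \<noteq> 0 \<or> coeff b m \<noteq> 0"
  by auto



lemma sfun_snoc_a': "sfun (w @ [La]) = sfun w - (if endb w then 1 else 0)"
  using sfun_snoc_a[of w] by linarith

lemma endb_snoc[simp]: "endb (w @ [l]) \<longleftrightarrow> l = Lb" by (simp add: endb_def)
lemma endb_nil[simp]: "\<not> endb []" by (simp add: endb_def)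

lemma hd_snoc: "hd (w @ [l]) = (if w = [] then l else hd w)" by (cases w) auto

lemma Inv_b_left: "Inv m t u v \<Longrightarrow> Inv m (t @ [Lb]) (u @ [Lb]) v"
  by (auto simp: Inv_def sfun_snoc_b hd_snoc)

lemma Inv_b_right: "Inv m t u v \<Longrightarrow> Inv m (t @ [Lb]) u (v @ [Lb])"
  by (auto simp: Inv_def sfun_snoc_b hd_snoc)

lemma Inv_aa_A: "Inv m t u' v \<Longrightarrow> u' = u @ [La] \<Longrightarrow> Inv m (t @ [La]) (u @ [La]) (v @ [La])"
  using sfun_snoc_a[of t] sfun_snoc_a[of v] sfun_snoc_a[of u]
  by (auto simp: Inv_def hd_snoc split: if_splits)

lemma Inv_aa_B: "Inv m t u v' \<Longrightarrow> v' = v @ [La] \<Longrightarrow> Inv m (t @ [La]) (u @ [La]) (v @ [La])"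
  using sfun_snoc_a[of t] sfun_snoc_a[of v] sfun_snoc_a[of u]
  by (auto simp: Inv_def hd_snoc split: if_splits)

lemma Inv_aa_C: "Inv m t u v \<Longrightarrow> Inv (Suc m) (t @ [La]) (u @ [La]) (v @ [La])"
  using sfun_snoc_a[of t] sfun_snoc_a[of v] sfun_snoc_a[of u]
  by (auto simp: Inv_def hd_snoc split: if_splits)

lemma shr_inv: "coeff (lk (shr xs ys) t) m \<noteq> 0 \<Longrightarrow> Inv m t (rev xs) (rev ys)"
proof (induction xs ys arbitrary: t m rule: shr.induct)
  case (1 ys)
  then show ?case by (auto simp: Inv_def dest!: coeff_mono_nz)
next
  case (2 v va)
  then have "t = rev (v # va) \<and> m = 0" by (simp del: rev.simps add: coeff_mono_nz)
  then show ?case by (auto simp: Inv_def)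
next
  case (3 xs v va)
  from "3.prems" obtain t' where "t = t' @ [Lb]" "coeff (lk (shr xs (v # va)) t') m \<noteq> 0"
    by (auto elim: coeff_rmul_nz)
  then show ?case using "3.IH" Inv_b_left by auto
next
  case (4 xs ys)
  from "4.prems" obtain t' where "t = t' @ [Lb]" "coeff (lk (shr (La # xs) ys) t') m \<noteq> 0"
    by (auto elim: coeff_rmul_nz)
  then show ?case using "4.IH" Inv_b_right by auto
next
  case (5 xs ys)
  from "5.prems" obtain t' where t: "t = t' @ [La]"
    and nz: "coeff (lk (shr (La # xs) ys + shr xs (La # ys) + cst hbar \<cdot> shr xs ys) t') m \<noteq> 0"
    by (auto elim: coeff_rmul_nz)
  from nz have "coeff (lk (shr (La # xs) ys) t') m \<noteq> 0 \<or> coeff (lk (shr xs (La # ys)) t') m \<noteq> 0 \<or>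
      coeff (hbar * lk (shr xs ys) t') m \<noteq> 0"
    by (auto simp: lookup_add lookup_cst_mult)
  then show ?case
  proof (elim disjE)
    assume "coeff (lk (shr (La # xs) ys) t') m \<noteq> 0"
    then show ?thesis using "5.IH"(1) t Inv_aa_A by auto
  next
    assume "coeff (lk (shr xs (La # ys)) t') m \<noteq> 0"
    then show ?thesis using "5.IH"(2) t Inv_aa_B by auto
  next
    assume "coeff (hbar * lk (shr xs ys) t') m \<noteq> 0"
    then have "m \<ge> 1" "coeff (lk (shr xs ys) t') (m - 1) \<noteq> 0" by (auto dest: coeff_hbar_nz)
    then show ?thesis using "5.IH"(3) t Inv_aa_C[of "m - 1"] by auto
  qed
qed



definition mk :: "nat list \<Rightarrow> nat list \<Rightarrow> letter list" where
  "mk al be = concat (map (\<lambda>i. replicate (al ! i) Lb @ Lb # replicate (Suc (be ! i)) La) [0..<length al])"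

lemma mk_Nil[simp]: "mk [] be = []" by (simp add: mk_def)

lemma mk_Cons: "mk (x # al) (y # be) = (replicate x Lb @ Lb # replicate (Suc y) La) @ mk al be"
  unfolding mk_def by (simp add: upt_conv_Cons map_Suc_upt[symmetric] o_def del: upt_Suc)

lemma mk_snoc: "length al = length be \<Longrightarrow> mk (al @ [x]) (be @ [y]) = mk al be @ (replicate x Lb @ Lb # replicate (Suc y) La)"
  unfolding mk_def by (auto simp: nth_append intro!: arg_cong[where f=concat] map_cong)

lemma cst_mult_cst: "cst c \<cdot> cst d = cst (c * d)" by (simp add: cst_sg single_mult)

lemma hbar_monom: "hbar = monom 1 1" by (simp add: hbar_def monom_Suc monom_0)
lemma hbar_pow: "hbar ^ n = monom 1 n"
  by (induction n) (auto simp: hbar_monom monom_0 mult_monom one_pCons)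

lemma ncpow_hb: "ncpow hb n = sg (replicate n Lb) (monom 1 n)"
proof (induction n)
  case 0 then show ?case by (simp add: ncone_sg monom_0 one_pCons)
next
  case (Suc n)
  have h: "hb = sg [Lb] (monom 1 1)" by (simp add: hb_def cst_mono hbar_monom)
  have "ncpow hb (Suc n) = hb \<cdot> sg (replicate n Lb) (monom 1 n)" using Suc.IH by simp
  also have "\<dots> = sg (replicate (Suc n) Lb) (monom 1 (Suc n))" by (simp add: h single_mult mult_monom)
  finally show ?case .
qed

lemma g_sg: "g k = sg (Lb # replicate k La) 1" by (simp add: g_def mono_sg)

lemma prodl_Cons: "prodl (x # xs) = x \<cdot> prodl xs" by (simp add: prodl_def)
lemma prodl_Nil: "prodl [] = ncone" by (simp add: prodl_def)
lemma prodl_append: "prodl (xs @ ys) = prodl xs \<cdot> prodl ys"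
  by (induction xs) (auto simp: prodl_Nil prodl_Cons ncmul_assoc)
lemma prodl_replicate: "prodl (replicate n x) = ncpow x n"
  by (induction n) (auto simp: prodl_Nil prodl_Cons)

lemma n0gen_aux: "prodl (concat (map (\<lambda>i. [ncpow hb (al ! i), g (be ! i + 1)]) is)) =
   sg (concat (map (\<lambda>i. replicate (al ! i) Lb @ Lb # replicate (Suc (be ! i)) La) is)) (monom 1 (\<Sum>i\<leftarrow>is. al ! i))"
  by (induction "is") (auto simp: prodl_Nil prodl_Cons ncone_sg monom_0 one_pCons ncpow_hb g_sg single_mult mult_monom)

lemma n0gen_sg: "n0gen al be = sg (mk al be) (monom 1 (\<Sum>i\<leftarrow>[0..<length al]. al ! i))"
  unfolding n0gen_def mk_def n0gen_aux by (rule refl)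

lemma sum_list_idx: "(\<Sum>i\<leftarrow>[0..<length al]. al ! i) = sum_list al"
  by (metis map_nth)

lemma n0gen_sg': "n0gen al be = sg (mk al be) (monom 1 (sum_list al))"
  by (simp add: n0gen_sg sum_list_idx)

lemma n0gen_flat: "prodl (concat (map (\<lambda>i. [ncpow hb (al ! i), g (Suc (be ! i))]) is)) =
   prodl (concat (map (\<lambda>i. replicate (al ! i) hb @ [g (Suc (be ! i))]) is))"
  by (induction "is") (auto simp: prodl_Cons prodl_append prodl_replicate ncmul_assoc)

lemma in_CA: "set xs \<subseteq> Aset \<Longrightarrow> prodl xs \<in> CA"
  unfolding CA_def using cspan.gen[of "prodl xs" "{prodl xs | xs. set xs \<subseteq> Aset}" 1] by auto

lemma n0gen_H0: 
  assumes "length al = length be" "1 \<le> length al"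
  shows "\<exists>x k. n0gen al be = x \<cdot> g k \<and> x \<in> CA \<and> 1 \<le> k"
proof -
  define n where "n = length al - 1"
  have "length al = Suc n" using assms by (simp add: n_def)
  then have up: "[0..<length al] = [0..<n] @ [n]" by simp
  define L where "L = concat (map (\<lambda>i. replicate (al ! i) hb @ [g (be ! i + 1)]) [0..<n]) @ replicate (al ! n) hb"
  define F where "F = (\<lambda>i. [ncpow hb (al ! i), g (Suc (be ! i))])"
  define F' where "F' = (\<lambda>i. replicate (al ! i) hb @ [g (Suc (be ! i))])"
  have "n0gen al be = prodl (concat (map F [0..<n]) @ [ncpow hb (al ! n), g (Suc (be ! n))])"
    unfolding n0gen_def up F_def by simp
  also have "\<dots> = prodl (concat (map F [0..<n])) \<cdot> ncpow hb (al ! n) \<cdot> g (Suc (be ! n))"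
    by (simp only: prodl_append prodl_Cons prodl_Nil ncone_right ncmul_assoc)
  also have "\<dots> = prodl (concat (map F' [0..<n])) \<cdot> prodl (replicate (al ! n) hb) \<cdot> g (Suc (be ! n))"
    unfolding F_def F'_def by (simp only: n0gen_flat prodl_replicate)
  also have "\<dots> = prodl (L @ [g (be ! n + 1)])"
    unfolding L_def F'_def by (simp only: prodl_append prodl_Cons prodl_Nil ncone_right ncmul_assoc Suc_eq_plus1)
  finally have "n0gen al be = prodl (L @ [g (be ! n + 1)])" .
  also have "\<dots> = prodl L \<cdot> g (be ! n + 1)" by (simp add: prodl_append prodl_Cons prodl_Nil)
  finally have e: "n0gen al be = prodl L \<cdot> g (be ! n + 1)" .
  have "set L \<subseteq> Aset" by (auto simp: L_def Aset_def)
  then have "prodl L \<in> CA" by (rule in_CA)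
  then show ?thesis using e by (intro exI[of _ "prodl L"] exI[of _ "be ! n + 1"]) simp
qed



definition PN :: "nat \<Rightarrow> letter list \<Rightarrow> bool" where
  "PN j t \<longleftrightarrow> (t = [] \<and> 1 \<le> j) \<or>
     (\<exists>al be. length al = length be \<and> 1 \<le> length al \<and> t = mk al be \<and>
        (sum_list al < j \<or> (sum_list al \<le> j \<and> (\<exists>s tt. s \<le> tt \<and> tt < length al \<and> 1 \<le> al ! s \<and> 1 \<le> be ! tt))))"

lemma frak_n_zero: "0 \<in> frak_n"
  unfolding frak_n_def by (rule CollectI, rule exI[of _ 0], rule exI[of _ 0]) (auto intro: cspan.zero simp: frak_n0_def H0hat_def)

lemma frak_n_add: "x \<in> frak_n \<Longrightarrow> y \<in> frak_n \<Longrightarrow> x + y \<in> frak_n"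
proof -
  assume "x \<in> frak_n" "y \<in> frak_n"
  then obtain x1 y1 x2 y2 where "x = x1 + cst hbar \<cdot> y1" "y = x2 + cst hbar \<cdot> y2"
    "x1 \<in> frak_n0" "y1 \<in> H0hat" "x2 \<in> frak_n0" "y2 \<in> H0hat" unfolding frak_n_def by blast
  then show ?thesis unfolding frak_n_def frak_n0_def H0hat_def
    by (intro CollectI exI[of _ "x1 + x2"] exI[of _ "y1 + y2"]) (auto intro: cspan.add simp: ncmul_add_right)
qed

lemma frak_n_sum: "(\<And>i. i \<in> I \<Longrightarrow> f i \<in> frak_n) \<Longrightarrow> (\<Sum>i\<in>I. f i) \<in> frak_n"
  by (induction I rule: infinite_finite_induct) (auto intro: frak_n_zero frak_n_add)

lemma frak_nI: "x \<in> frak_n0 \<Longrightarrow> y \<in> H0hat \<Longrightarrow> z = x + cst hbar \<cdot> y \<Longrightarrow> z \<in> frak_n"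
  unfolding frak_n_def by blast

lemma cst_monom_split: "cst (monom c (i + j)) \<cdot> x = cst (monom c i) \<cdot> (cst (monom 1 j) \<cdot> x)"
  by (simp add: cst_cst mult_monom)

lemma monom_in_frak:
  assumes "PN j t"
  shows "cst (monom c j) \<cdot> mono t \<in> frak_n"
  using assms unfolding PN_def
proof (elim disjE exE conjE)
  assume t: "t = []" and j: "1 \<le> j"
  have "cst (monom c (j - 1)) \<cdot> ncone \<in> H0hat" unfolding H0hat_def by (rule cspan.gen) simp
  moreover have "cst (monom c j) \<cdot> mono t = 0 + cst hbar \<cdot> (cst (monom c (j - 1)) \<cdot> ncone)"
  proof -
    have "monom 1 1 * monom c (j - 1) = monom c j" using j by (simp add: mult_monom)
    then show ?thesis using t by (simp add: cst_mult_cst hbar_monom mono_nil)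
  qed
  moreover have "(0::nc) \<in> frak_n0" unfolding frak_n0_def by (rule cspan.zero)
  ultimately show ?thesis by (intro frak_nI)
next
  fix al be assume l: "length al = length be" "1 \<le> length al" and t: "t = mk al be" and lt: "sum_list al < j"
  obtain x k where xk: "n0gen al be = x \<cdot> g k" "x \<in> CA" "1 \<le> k" using n0gen_H0[OF l] by blast
  have "cst (monom c (j - 1 - sum_list al)) \<cdot> (x \<cdot> g k) \<in> H0hat" unfolding H0hat_def
    apply (rule cspan.gen) apply (rule UnI2) apply (rule CollectI)
    apply (rule exI[of _ x], rule exI[of _ k]) using xk by simp
  moreover have "cst (monom c j) \<cdot> mono t = 0 + cst hbar \<cdot> (cst (monom c (j - 1 - sum_list al)) \<cdot> (x \<cdot> g k))"
  proof -
    define r where "r = j - 1 - sum_list al"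
    have "monom 1 1 * (monom c r * monom 1 (sum_list al)) = monom c j"
      using lt by (simp add: mult_monom r_def)
    then have "cst (monom c j) \<cdot> mono t = cst hbar \<cdot> (cst (monom c r) \<cdot> n0gen al be)"
      by (simp add: n0gen_sg' t hbar_monom mono_sg cst_sg single_mult mult.assoc)
    then show ?thesis using xk by (simp add: r_def)
  qed
  moreover have "(0::nc) \<in> frak_n0" unfolding frak_n0_def by (rule cspan.zero)
  ultimately show ?thesis by (intro frak_nI)
next
  fix al be s tt assume l: "length al = length be" "1 \<le> length al" and t: "t = mk al be" and le: "sum_list al \<le> j"
    and sp: "s \<le> tt" "tt < length al" "1 \<le> al ! s" "1 \<le> be ! tt"
  have "cst (monom c (j - sum_list al)) \<cdot> n0gen al be \<in> frak_n0" unfolding frak_n0_def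
    apply (rule cspan.gen) apply (rule CollectI)
    apply (rule exI[of _ al], rule exI[of _ be]) using l sp by auto
  moreover have "cst (monom c j) \<cdot> mono t = cst (monom c (j - sum_list al)) \<cdot> n0gen al be + cst hbar \<cdot> 0"
  proof -
    define r where "r = j - sum_list al"
    have "monom c r * monom 1 (sum_list al) = monom c j"
      using le by (simp add: mult_monom r_def)
    then show ?thesis by (simp add: n0gen_sg' t mono_sg cst_sg single_mult r_def)
  qed
  moreover have "(0::nc) \<in> H0hat" unfolding H0hat_def by (rule cspan.zero)
  ultimately show ?thesis by (intro frak_nI)
qed

lemma cst_sum_coef: "cst (\<Sum>i\<in>I. f i) = (\<Sum>i\<in>I. cst (f i))"
  by (induction I rule: infinite_finite_induct) (auto simp: cst_def single_add)

lemma inS_PN_frak: "inS PN x \<Longrightarrow> x \<in> frak_n"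
proof -
  assume a: "inS PN x"
  have "x = (\<Sum>t\<in>kz x. cst (lk x t) \<cdot> mono t)" by (simp add: cst_mono nc_expand[symmetric])
  also have "\<dots> = (\<Sum>t\<in>kz x. \<Sum>j\<le>degree (lk x t). cst (monom (coeff (lk x t) j) j) \<cdot> mono t)"
    by (subst (1) poly_as_sum_of_monoms[symmetric]) (simp add: cst_sum_coef ncmul_sum_left)
  finally have e: "x = \<dots>" .
  have "(\<Sum>t\<in>kz x. \<Sum>j\<le>degree (lk x t). cst (monom (coeff (lk x t) j) j) \<cdot> mono t) \<in> frak_n"
  proof (intro frak_n_sum)
    fix t j
    show "cst (monom (coeff (lk x t) j) j) \<cdot> mono t \<in> frak_n"
    proof (cases "coeff (lk x t) j = 0")
      case True then show ?thesis by (simp add: frak_n_zero)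
    next
      case False then have "PN j t" using a unfolding inS_def by blast
      then show ?thesis by (rule monom_in_frak)
    qed
  qed
  with e show ?thesis by simp
qed


definition ends_aa :: "letter list \<Rightarrow> bool" where "ends_aa w \<longleftrightarrow> (\<exists>u. w = u @ [La, La])"

lemma ends_aa_Cons: "2 \<le> length w \<Longrightarrow> ends_aa (x # w) \<longleftrightarrow> ends_aa w"
  unfolding ends_aa_def
proof
  assume "2 \<le> length w" "\<exists>u. x # w = u @ [La, La]"
  then obtain u where u: "x # w = u @ [La, La]" by blast
  with \<open>2 \<le> length w\<close> have "u \<noteq> []" by (cases u) auto
  then obtain u' where "u = x # u'" using u by (cases u) auto
  then show "\<exists>u. w = u @ [La, La]" using u by auto
next
  assume "\<exists>u. w = u @ [La, La]"
  then show "\<exists>u. x # w = u @ [La, La]" by (metis append_Cons)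
qed

lemma length_mk: "1 \<le> length al \<Longrightarrow> length al = length be \<Longrightarrow> 2 \<le> length (mk al be)"
  by (cases al; cases be) (auto simp: mk_Cons)

lemma hd_mk: "1 \<le> length al \<Longrightarrow> length al = length be \<Longrightarrow> hd (mk al be) = Lb"
  by (cases al; cases be) (auto simp: mk_Cons hd_append)

lemma sfun_rep_a: "sfun (replicate k La @ w) = sfun w"
  by (induction k) auto

lemma sfun_Lb_Lb: "w \<noteq> [] \<Longrightarrow> hd w = Lb \<Longrightarrow> sfun (Lb # w) = Suc (sfun w)"
  by (cases w) auto

lemma parse_aux:
  "w \<noteq> [] \<Longrightarrow> last w = La \<Longrightarrow> (\<exists>k. 1 \<le> k \<and> w = replicate k La) \<or>
     (\<exists>k al be. length al = length be \<and> 1 \<le> length al \<and> w = replicate k La @ mk al be \<and>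
        sfun w = sum_list al \<and> (ends_aa w \<longrightarrow> 1 \<le> last be))"
proof (induction w)
  case Nil then show ?case by simp
next
  case (Cons x w)
  show ?case
  proof (cases x)
    case La
    show ?thesis
    proof (cases "w = []")
      case True then show ?thesis using La by (intro disjI1 exI[of _ 1]) auto
    next
      case False
      then have "last w = La" using Cons.prems by simp
      from Cons.IH[OF False this] show ?thesis
      proof (elim disjE exE conjE)
        fix k assume "1 \<le> k" "w = replicate k La"
        then show ?thesis using La by (intro disjI1 exI[of _ "Suc k"]) auto
      next
        fix k al be assume h: "length al = length be" "1 \<le> length al" "w = replicate k La @ mk al be"
          "sfun w = sum_list al" "ends_aa w \<longrightarrow> 1 \<le> last be"
        have "2 \<le> length w" using length_mk[OF h(2,1)] h(3) by simp
        then show ?thesis using La h ends_aa_Cons[of w x]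
          by (intro disjI2 exI[of _ "Suc k"] exI[of _ al] exI[of _ be]) auto
      qed
    qed
  next
    case Lb
    have wne: "w \<noteq> []" using Cons.prems Lb by auto
    then have "last w = La" using Cons.prems by simp
    from Cons.IH[OF wne this] show ?thesis
    proof (elim disjE exE conjE)
      fix k assume k: "1 \<le> k" "w = replicate k La"
      have aa: "ends_aa (x # w) \<Longrightarrow> 2 \<le> k"
      proof (rule ccontr)
        assume "ends_aa (x # w)" "\<not> 2 \<le> k"
        then have "k = 1" using k by simp
        then show False using \<open>ends_aa (x # w)\<close> k Lb unfolding ends_aa_def
          by (auto simp: append_eq_Cons_conv)
      qed
      have "x # w = mk [0] [k - 1]" using k Lb by (simp add: mk_Cons)
      moreover have "sfun (x # w) = 0" using k Lb by (cases k) (auto simp: sfun_rep_a[of _ "[]", simplified])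
      ultimately show ?thesis using aa
        by (intro disjI2 exI[of _ 0] exI[of _ "[0]"] exI[of _ "[k - 1]"]) auto
    next
      fix k al be assume h: "length al = length be" "1 \<le> length al" "w = replicate k La @ mk al be"
        "sfun w = sum_list al" "ends_aa w \<longrightarrow> 1 \<le> last be"
      have l2: "2 \<le> length w" using length_mk[OF h(2,1)] h(3) by simp
      obtain a0 al' where al: "al = a0 # al'" using h(2) by (cases al) auto
      obtain b0 be' where be: "be = b0 # be'" using h(1,2) by (cases be) auto
      show ?thesis
      proof (cases k)
        case 0
        have w: "x # w = mk (Suc a0 # al') be" using h(3) 0 Lb al be by (simp add: mk_Cons)
        have "sfun (x # w) = Suc (sfun w)" using Lb 0 h(3) hd_mk[OF h(2,1)] wne by (simp add: sfun_Lb_Lb)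
        then show ?thesis using w h al be ends_aa_Cons[OF l2, of x]
          by (intro disjI2 exI[of _ 0] exI[of _ "Suc a0 # al'"] exI[of _ be]) auto
      next
        case (Suc k')
        have w: "x # w = mk (0 # al) (k' # be)" using h(3) Suc Lb by (simp add: mk_Cons)
        have "sfun (x # w) = sfun w" using Lb Suc h(3) by simp
        moreover have "last (k' # be) = last be" using be by simp
        ultimately show ?thesis using w h ends_aa_Cons[OF l2, of x]
          by (intro disjI2 exI[of _ 0] exI[of _ "0 # al"] exI[of _ "k' # be"]) auto
      qed
    qed
  qed
qed

lemma parse:
  assumes "w \<noteq> []" "hd w = Lb" "last w = La"
  shows "\<exists>al be. length al = length be \<and> 1 \<le> length al \<and> w = mk al be \<and>
        sfun w = sum_list al \<and> (ends_aa w \<longrightarrow> 1 \<le> last be)"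
proof -
  from parse_aux[OF assms(1,3)] show ?thesis
  proof (elim disjE exE conjE)
    fix k assume "1 \<le> k" "w = replicate k La"
    then show ?thesis using assms(2) by (cases k) auto
  next
    fix k al be assume h: "length al = length be" "1 \<le> length al" "w = replicate k La @ mk al be"
      "sfun w = sum_list al" "ends_aa w \<longrightarrow> 1 \<le> last be"
    have "k = 0" using assms(2) h(3) hd_mk[OF h(2,1)] by (cases k) auto
    then show ?thesis using h by (intro exI[of _ al] exI[of _ be]) auto
  qed
qed

lemma PN_intro:
  assumes "w \<noteq> []" "hd w = Lb" "last w = La" "sfun w < j \<or> (sfun w \<le> j \<and> 1 \<le> sfun w \<and> ends_aa w)"
  shows "PN j w"
proof -
  obtain al be where h: "length al = length be" "1 \<le> length al" "w = mk al be"
    "sfun w = sum_list al" "ends_aa w \<longrightarrow> 1 \<le> last be" using parse[OF assms(1-3)] by blast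
  from assms(4) show ?thesis
  proof
    assume "sfun w < j" then show ?thesis using h unfolding PN_def by auto
  next
    assume a: "sfun w \<le> j \<and> 1 \<le> sfun w \<and> ends_aa w"
    then have s1: "1 \<le> sum_list al" using h by simp
    have "\<not> (\<forall>x\<in>set al. x = 0)"
    proof
      assume "\<forall>x\<in>set al. x = 0"
      then have "sum_list al = 0" by simp
      with s1 show False by simp
    qed
    then obtain x where "x \<in> set al" "x \<noteq> 0" by blast
    then obtain s where s: "s < length al" "1 \<le> al ! s"
      by (metis One_nat_def Suc_leI in_set_conv_nth not_gr_zero)
    have "be \<noteq> []" using h by auto
    then have "last be = be ! (length al - 1)" using h by (simp add: last_conv_nth)
    then have "1 \<le> be ! (length al - 1)" using a h by simp
    moreover have "s \<le> length al - 1" "length al - 1 < length al" using s by auto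
    ultimately show ?thesis using h a s unfolding PN_def by (intro disjI2 exI[of _ al] exI[of _ be]) auto
  qed
qed

lemma PN_mono: "PN j t \<Longrightarrow> j \<le> j' \<Longrightarrow> PN j' t"
  unfolding PN_def
  apply (elim disjE exE conjE)
    apply simp
   apply (rule disjI2, rule_tac x=al in exI, rule_tac x=be in exI) apply simp
  apply (rule disjI2, rule_tac x=al in exI, rule_tac x=be in exI) apply (simp, blast)
  done

definition Dc :: "nat \<Rightarrow> letter list \<Rightarrow> bool" where
  "Dc j t \<longleftrightarrow> t = [] \<or> (hd t = Lb \<and> sfun t \<le> j)"
definition Dp :: "nat \<Rightarrow> letter list \<Rightarrow> bool" where
  "Dp j t \<longleftrightarrow> t \<noteq> [] \<and> hd t = Lb \<and> sfun t \<le> j \<and> 1 \<le> j"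

lemma Dp_Dc: "Dp j t \<Longrightarrow> Dc j t" by (simp add: Dp_def Dc_def)
lemma inS_Dp_Dc: "inS Dp x \<Longrightarrow> inS Dc x" by (erule inS_weaken) (rule Dp_Dc)

lemma Dp_PN: "Dp j t \<Longrightarrow> PN j (t @ [La])"
proof -
  assume d: "Dp j t"
  have s: "sfun (t @ [La]) + (if endb t then 1 else 0) = sfun t" by (rule sfun_snoc_a)
  show ?thesis
  proof (cases "endb t")
    case True
    then show ?thesis using d s by (intro PN_intro) (auto simp: Dp_def hd_append)
  next
    case False
    then have "last t = La" using d by (cases "last t") (auto simp: Dp_def endb_def)
    then have "ends_aa (t @ [La])" using d unfolding ends_aa_def Dp_def
      by (intro exI[of _ "butlast t"]) (metis append.assoc append_butlast_last_id append_Cons append_Nil)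
    then show ?thesis using d s False by (intro PN_intro) (auto simp: Dp_def hd_append)
  qed
qed

lemma Inv_shw: "coeff (lk (shw u v) t) m \<noteq> 0 \<Longrightarrow> Inv m t u v"
  using shr_inv[of "rev u" "rev v" t m] by (simp add: shw_def)

lemma sh_Dc_Dp: "inS Dc z \<Longrightarrow> inS Dp x \<Longrightarrow> inS Dp (sh z x)"
  by (erule inS_sh, assumption) (auto simp: Dc_def Dp_def Inv_def dest!: Inv_shw)

lemma sh_Dp_Dc: "inS Dp x \<Longrightarrow> inS Dc z \<Longrightarrow> inS Dp (sh x z)"
  by (erule inS_sh, assumption) (auto simp: Dc_def Dp_def Inv_def dest!: Inv_shw)

lemma sh_Dc_Dc: "inS Dc z \<Longrightarrow> inS Dc x \<Longrightarrow> inS Dc (sh z x)"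
  by (erule inS_sh, assumption) (auto simp: Dc_def Inv_def dest!: Inv_shw)

lemma lemmaV1: "inS Dc z \<Longrightarrow> inS Dp x \<Longrightarrow> inS PN (rmul (sh z x) La)"
  by (rule inS_rmul[OF sh_Dc_Dp]) (auto intro: Dp_PN)

lemma lemmaV2: "inS Dp x \<Longrightarrow> inS Dc z \<Longrightarrow> inS PN (rmul (sh x z) La)"
  by (rule inS_rmul[OF sh_Dp_Dc]) (auto intro: Dp_PN)

lemma lemmaV0: "inS Dp x \<Longrightarrow> inS PN (rmul x La)"
  by (rule inS_rmul[where Q=Dp]) (auto intro: Dp_PN)

lemma sfun_repb: "sfun (replicate l Lb) = l"
  by (induction l) (simp, metis replicate_Suc replicate_append_same sfun_snoc_b)

lemma PN_ext: "PN j t \<Longrightarrow> 1 \<le> l \<Longrightarrow> PN (j + (l - 1)) (t @ replicate l Lb @ [La])"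
proof -
  assume p: "PN j t" and l: "1 \<le> l"
  have r: "replicate l Lb @ [La] = replicate (l - 1) Lb @ Lb # replicate (Suc 0) La"
    using l by (cases l) (auto simp: replicate_append_same)
  from p[unfolded PN_def] show ?thesis
  proof (elim disjE exE conjE)
    assume "t = []" "1 \<le> j"
    then show ?thesis using r unfolding PN_def by (intro disjI2 exI[of _ "[l - 1]"] exI[of _ "[0]"]) (auto simp: mk_Cons)
  next
    fix al be assume h: "length al = length be" "1 \<le> length al" "t = mk al be" "sum_list al < j"
    then show ?thesis using r unfolding PN_def
      by (intro disjI2 exI[of _ "al @ [l - 1]"] exI[of _ "be @ [0]"]) (auto simp: mk_snoc)
  next
    fix al be s tt assume h: "length al = length be" "1 \<le> length al" "t = mk al be" "sum_list al \<le> j"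
      "s \<le> tt" "tt < length al" "1 \<le> al ! s" "1 \<le> be ! tt"
    have m: "t @ replicate l Lb @ [La] = mk (al @ [l - 1]) (be @ [0])" using h r by (simp add: mk_snoc)
    have sp: "s \<le> tt \<and> tt < length (al @ [l - 1]) \<and> 1 \<le> (al @ [l - 1]) ! s \<and> 1 \<le> (be @ [0]) ! tt"
      using h by (simp add: nth_append)
    have su: "sum_list (al @ [l - 1]) \<le> j + (l - 1)" using h by simp
    have ex: "\<exists>s tt. s \<le> tt \<and> tt < length (al @ [l - 1]) \<and> 1 \<le> (al @ [l - 1]) ! s \<and> 1 \<le> (be @ [0]) ! tt"
      using sp by blast
    show ?thesis unfolding PN_def
      by (rule disjI2, rule exI[of _ "al @ [l - 1]"], rule exI[of _ "be @ [0]"]) (use h m su ex in simp)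
  qed
qed

lemma closure_PN:
  assumes "inS PN x" "1 \<le> l" "\<And>i. coeff c i \<noteq> 0 \<Longrightarrow> l - 1 \<le> i"
  shows "inS PN (rmul (cst c \<cdot> (x \<cdot> mono (replicate l Lb))) La)"
proof -
  have "inS (\<lambda>j t. \<exists>t0. PN j t0 \<and> t = t0 @ replicate l Lb) (x \<cdot> mono (replicate l Lb))"
    by (rule inS_mult_mono[OF assms(1)]) blast
  then have "inS (\<lambda>j t. \<exists>j0 t0. PN j0 t0 \<and> j0 + (l - 1) \<le> j \<and> t = t0 @ replicate l Lb) (cst c \<cdot> (x \<cdot> mono (replicate l Lb)))"
  proof (rule inS_cst)
    fix i j t assume "coeff c i \<noteq> 0" "\<exists>t0. PN j t0 \<and> t = t0 @ replicate l Lb"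
    then show "\<exists>j0 t0. PN j0 t0 \<and> j0 + (l - 1) \<le> i + j \<and> t = t0 @ replicate l Lb"
      using assms(3)[of i] by (intro exI[of _ j]) auto
  qed
  then show ?thesis
  proof (rule inS_rmul)
    fix j t assume "\<exists>j0 t0. PN j0 t0 \<and> j0 + (l - 1) \<le> j \<and> t = t0 @ replicate l Lb"
    then obtain j0 t0 where h: "PN j0 t0" "j0 + (l - 1) \<le> j" "t = t0 @ replicate l Lb" by blast
    have "PN (j0 + (l - 1)) (t0 @ replicate l Lb @ [La])" by (rule PN_ext[OF h(1) assms(2)])
    then show "PN j (t @ [La])" using h(2,3) PN_mono by auto
  qed
qed

lemma closure_Dc:
  assumes "inS Dc x" "1 \<le> l" "\<And>i. coeff c i \<noteq> 0 \<Longrightarrow> l \<le> i"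
  shows "inS PN (rmul (cst c \<cdot> (x \<cdot> mono (replicate l Lb))) La)"
proof -
  have "inS (\<lambda>j t. \<exists>t0. Dc j t0 \<and> t = t0 @ replicate l Lb) (x \<cdot> mono (replicate l Lb))"
    by (rule inS_mult_mono[OF assms(1)]) blast
  then have "inS Dp (cst c \<cdot> (x \<cdot> mono (replicate l Lb)))"
  proof (rule inS_cst)
    fix i j t assume "coeff c i \<noteq> 0" "\<exists>t0. Dc j t0 \<and> t = t0 @ replicate l Lb"
    then show "Dp (i + j) t"
      using assms(2) assms(3)[of i] by (auto simp: Dc_def Dp_def sfun_append sfun_repb hd_append)
  qed
  then show ?thesis by (rule lemmaV0)
qed

lemma Dc_mult: "inS Dc x \<Longrightarrow> inS Dc y \<Longrightarrow> inS Dc (x \<cdot> y)"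
  by (erule inS_mult, assumption) (auto simp: Dc_def sfun_append hd_append)
lemma Dp_mult_left: "inS Dp x \<Longrightarrow> inS Dc y \<Longrightarrow> inS Dp (x \<cdot> y)"
  by (erule inS_mult, assumption) (auto simp: Dc_def Dp_def sfun_append hd_append)
lemma Dp_mult_right: "inS Dc x \<Longrightarrow> inS Dp y \<Longrightarrow> inS Dp (x \<cdot> y)"
  by (erule inS_mult, assumption) (auto simp: Dc_def Dp_def sfun_append hd_append)


lemma sum_tri3:
  fixes f :: "nat \<Rightarrow> nat \<Rightarrow> nat \<Rightarrow> 'a::comm_monoid_add"
  shows "(\<Sum>i\<le>n. \<Sum>j\<le>i. f j (i - j) (n - i)) = (\<Sum>j\<le>n. \<Sum>k\<le>n - j. f j k (n - j - k))"
proof -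
  have "(\<Sum>i\<le>n. \<Sum>j\<le>i. f j (i - j) (n - i)) = (\<Sum>(j, k)\<in>{(j, k). j + k \<le> n}. f j k (n - j - k))"
    by (subst sum.triangle_reindex_eq) (auto intro!: sum.cong simp: diff_diff_add)
  also have "\<dots> = (\<Sum>(j, k)\<in>(SIGMA j:{..n}. {..n - j}). f j k (n - j - k))"
    by (rule sum.cong) auto
  also have "\<dots> = (\<Sum>j\<le>n. \<Sum>k\<le>n - j. f j k (n - j - k))"
    by (rule sum.Sigma[symmetric]) auto
  finally show ?thesis .
qed

lemma smul_assoc: "smul (smul F G) H n = smul F (smul G H) n"
proof -
  have "smul (smul F G) H n = (\<Sum>i\<le>n. \<Sum>j\<le>i. (F j \<cdot> G (i - j)) \<cdot> H (n - i))"
    by (simp add: smul_def ncmul_sum_left)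
  also have "\<dots> = (\<Sum>j\<le>n. \<Sum>k\<le>n - j. (F j \<cdot> G k) \<cdot> H (n - j - k))"
    by (rule sum_tri3)
  also have "\<dots> = smul F (smul G H) n"
    by (simp add: smul_def ncmul_sum_right ncmul_assoc)
  finally show ?thesis .
qed

lemma smul_sone_left: "smul sone F n = F n"
  by (simp add: smul_def sone_def atMost_atLeast0 sum.atLeast_Suc_atMost[of 0] if_distrib
      cong: if_cong)

lemma smul_sone_right: "smul F sone n = F n"
proof -
  have "smul F sone n = (\<Sum>i\<le>n. if i = n then F i else 0)"
    unfolding smul_def sone_def by (rule sum.cong) auto
  then show ?thesis by simp
qed

lemma smul_cong: "(\<And>k. G k = H k) \<Longrightarrow> smul F G n = smul F H n"
  by (simp add: smul_def)

lemma spow_comm: "smul (spow F m) F n = smul F (spow F m) n"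
proof (induction m arbitrary: n)
  case 0 then show ?case by (simp add: smul_sone_left smul_sone_right)
next
  case (Suc m)
  have "smul (spow F (Suc m)) F n = smul (smul F (spow F m)) F n" by simp
  also have "\<dots> = smul F (smul (spow F m) F) n" by (rule smul_assoc)
  also have "\<dots> = smul F (smul F (spow F m)) n"
    by (rule smul_cong) (rule Suc.IH)
  finally show ?case by simp
qed

lemma spow_right: "spow F (Suc m) n = smul (spow F m) F n"
  using spow_comm by simp

lemma spow_vanish: "F 0 = 0 \<Longrightarrow> n < m \<Longrightarrow> spow F m n = 0"
proof (induction m arbitrary: n)
  case 0 then show ?case by simp
next
  case (Suc m)
  have "spow F (Suc m) n = (\<Sum>i\<le>n. F i \<cdot> spow F m (n - i))" by (simp add: smul_def)
  also have "\<dots> = 0"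
  proof (rule sum.neutral, rule ballI)
    fix i assume "i \<in> {..n}"
    show "F i \<cdot> spow F m (n - i) = 0"
    proof (cases "i = 0")
      case True then show ?thesis using Suc.prems by simp
    next
      case False then have "n - i < m" using Suc.prems \<open>i \<in> {..n}\<close> by auto
      then show ?thesis using Suc.IH Suc.prems by simp
    qed
  qed
  finally show ?case .
qed

lemma geom_rec:
  assumes F0: "F 0 = 0" and n: "1 \<le> n"
  shows "geom F n = (\<Sum>l\<in>{1..n}. geom F (n - l) \<cdot> F l)"
proof -
  have "geom F n = (\<Sum>m<n. spow F (Suc m) n)"
  proof -
    have "geom F n = spow F 0 n + (\<Sum>m<n. spow F (Suc m) n)"
      unfolding geom_def by (simp add: sum.atMost_shift)
    moreover have "spow F 0 n = 0" using n by (simp add: sone_def)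
    ultimately show ?thesis by simp
  qed
  also have "\<dots> = (\<Sum>m<n. \<Sum>i\<le>n. spow F m i \<cdot> F (n - i))"
    by (simp add: spow_right smul_def del: spow.simps)
  also have "\<dots> = (\<Sum>i\<le>n. (\<Sum>m<n. spow F m i) \<cdot> F (n - i))"
    by (subst sum.swap) (simp add: ncmul_sum_left)
  also have "\<dots> = (\<Sum>i<n. geom F i \<cdot> F (n - i))"
  proof -
    have "(\<Sum>i\<le>n. (\<Sum>m<n. spow F m i) \<cdot> F (n - i)) = (\<Sum>i<n. (\<Sum>m<n. spow F m i) \<cdot> F (n - i))"
      using F0 by (simp add: lessThan_Suc_atMost[symmetric])
    also have "\<dots> = (\<Sum>i<n. geom F i \<cdot> F (n - i))"
    proof (rule sum.cong[OF refl])
      fix i assume i: "i \<in> {..<n}"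
      have "(\<Sum>m<n. spow F m i) = (\<Sum>m\<le>i. spow F m i)"
        by (rule sum.mono_neutral_right) (use i spow_vanish[where F=F, OF F0] in auto)
      then show "(\<Sum>m<n. spow F m i) \<cdot> F (n - i) = geom F i \<cdot> F (n - i)" by (simp add: geom_def)
    qed
    finally show ?thesis .
  qed
  also have "\<dots> = (\<Sum>l\<in>{1..n}. geom F (n - l) \<cdot> F l)"
    by (rule sum.reindex_bij_witness[where i="\<lambda>l. n - l" and j="\<lambda>i. n - i"]) auto
  finally show ?thesis .
qed

lemma ncpow_right': "ncpow p n \<cdot> p = p \<cdot> ncpow p n"
  by (induction n) (auto simp: ncmul_assoc)

lemma ncpow_right: "ncpow p (Suc n) = ncpow p n \<cdot> p"
  by (simp add: ncpow_right')

lemma spow_GX: "spow GX m n = (if m = n then ncpow (g 1) m else 0)"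
proof (induction m arbitrary: n)
  case 0 then show ?case by (simp add: sone_def)
next
  case (Suc m)
  have "spow GX (Suc m) n = (\<Sum>i\<le>n. GX i \<cdot> spow GX m (n - i))" by (simp add: smul_def)
  also have "\<dots> = (\<Sum>i\<le>n. if i = 1 then g 1 \<cdot> spow GX m (n - 1) else 0)"
    by (rule sum.cong) (auto simp: GX_def)
  also have "\<dots> = (if 1 \<le> n then g 1 \<cdot> spow GX m (n - 1) else 0)" by (simp add: sum.delta)
  finally show ?case using Suc.IH by (cases n) auto
qed

lemma geom_GX: "geom GX n = ncpow (g 1) n"
  by (simp add: geom_def spow_GX sum.delta)


definition Bl :: "nat \<Rightarrow> nc" where "Bl l = mono (replicate l Lb)"

lemma swapA:
  fixes f :: "nat \<Rightarrow> nat \<Rightarrow> 'a::comm_monoid_add"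
  shows "(\<Sum>i<n. \<Sum>l\<in>{1..n - i}. f i l) = (\<Sum>l\<in>{1..n}. \<Sum>i\<le>n - l. f i l)"
proof -
  have "(\<Sum>i<n. \<Sum>l\<in>{1..n - i}. f i l) = (\<Sum>i\<in>{..<n}. \<Sum>l\<in>{l\<in>{1..n}. l \<le> n - i}. f i l)"
    by (rule sum.cong[OF refl], rule sum.cong) auto
  also have "\<dots> = (\<Sum>l\<in>{1..n}. \<Sum>i\<in>{i\<in>{..<n}. l \<le> n - i}. f i l)"
    by (rule sum.swap_restrict) auto
  also have "\<dots> = (\<Sum>l\<in>{1..n}. \<Sum>i\<le>n - l. f i l)"
    by (rule sum.cong[OF refl], rule sum.cong) auto
  finally show ?thesis .
qed

lemma swapB:
  fixes f :: "nat \<Rightarrow> nat \<Rightarrow> 'a::comm_monoid_add"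
  shows "(\<Sum>i\<le>n. \<Sum>l\<in>{1..i}. f i l) = (\<Sum>l\<in>{1..n}. \<Sum>i\<le>n - l. f (l + i) l)"
proof -
  have "(\<Sum>i\<le>n. \<Sum>l\<in>{1..i}. f i l) = (\<Sum>i\<in>{..n}. \<Sum>l\<in>{l\<in>{1..n}. l \<le> i}. f i l)"
    by (rule sum.cong[OF refl], rule sum.cong) auto
  also have "\<dots> = (\<Sum>l\<in>{1..n}. \<Sum>i\<in>{i\<in>{..n}. l \<le> i}. f i l)"
    by (rule sum.swap_restrict) auto
  also have "\<dots> = (\<Sum>l\<in>{1..n}. \<Sum>i\<le>n - l. f (l + i) l)"
  proof (rule sum.cong[OF refl])
    fix l assume "l \<in> {1..n}"
    show "(\<Sum>i\<in>{i\<in>{..n}. l \<le> i}. f i l) = (\<Sum>i\<le>n - l. f (l + i) l)"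
      by (rule sum.reindex_bij_witness[where i="\<lambda>i. l + i" and j="\<lambda>i. i - l"]) (use \<open>l \<in> {1..n}\<close> in auto)
  qed
  finally show ?thesis .
qed

lemma rmul_La_sum: "(\<Sum>i\<in>I. rmul (f i) La) = rmul (\<Sum>i\<in>I. f i) La"
  by (simp add: rmul_sum)

lemma sh_Bl_left: "sh (x \<cdot> Bl l) y = sh x y \<cdot> Bl l" by (simp add: Bl_def sh_repb_left)
lemma sh_Bl_right: "sh y (x \<cdot> Bl l) = sh y x \<cdot> Bl l" by (simp add: Bl_def sh_repb_right)

lemma M_rec:
  fixes A C c :: "nat \<Rightarrow> nc" and p q :: "nat \<Rightarrow> coef"
  assumes A0: "A 0 = ncone"
    and AS: "\<And>i. 1 \<le> i \<Longrightarrow> A i = rmul (\<Sum>l\<in>{1..i}. cst (p l) \<cdot> (A (i - l) \<cdot> Bl l)) La"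
    and CP: "\<And>j. C j = rmul (c j) La"
    and cS: "\<And>j. 1 \<le> j \<Longrightarrow> c j = (\<Sum>l\<in>{1..j}. cst (q l) \<cdot> (C (j - l) \<cdot> Bl l))"
    and M: "\<And>n. M n = (\<Sum>i\<le>n. sh (A i) (C (n - i)))"
  shows "M n = rmul (sh (A n) (c 0) + (\<Sum>l\<in>{1..n}. cst (q l) \<cdot> (M (n - l) \<cdot> Bl l))
     + (\<Sum>l\<in>{1..n}. cst (p l) \<cdot> (M (n - l) \<cdot> Bl l))
     + cst hbar \<cdot> (\<Sum>l\<in>{1..n}. cst (p l) \<cdot> ((sh (A (n - l)) (c 0)
          + (\<Sum>l2\<in>{1..n - l}. cst (q l2) \<cdot> (M (n - l - l2) \<cdot> Bl l2))) \<cdot> Bl l))) La"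
proof -
  define a where "a i = (\<Sum>l\<in>{1..i}. cst (p l) \<cdot> (A (i - l) \<cdot> Bl l))" for i
  define T1 where "T1 n = (\<Sum>i\<le>n. sh (A i) (c (n - i)))" for n
  have S: "sh (A i) (C j) = rmul (sh (A i) (c j) + sh (a i) (C j) + cst hbar \<cdot> sh (a i) (c j)) La" for i j
  proof (cases "i = 0")
    case True
    then show ?thesis by (simp add: A0 a_def CP)
  next
    case False
    then have Ai: "A i = rmul (a i) La" using AS[of i] by (simp add: a_def)
    show ?thesis unfolding Ai CP by (rule sh_pa_pa)
  qed
  have T1: "T1 m = sh (A m) (c 0) + (\<Sum>l\<in>{1..m}. cst (q l) \<cdot> (M (m - l) \<cdot> Bl l))" for m
  proof -
    have "T1 m = (\<Sum>i<m. sh (A i) (c (m - i))) + sh (A m) (c 0)"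
      by (simp add: T1_def lessThan_Suc_atMost[symmetric])
    also have "(\<Sum>i<m. sh (A i) (c (m - i))) = (\<Sum>i<m. \<Sum>l\<in>{1..m - i}. cst (q l) \<cdot> (sh (A i) (C (m - i - l)) \<cdot> Bl l))"
      by (rule sum.cong[OF refl]) (simp add: cS sh_sum_right sh_cst_right sh_Bl_right)
    also have "\<dots> = (\<Sum>l\<in>{1..m}. \<Sum>i\<le>m - l. cst (q l) \<cdot> (sh (A i) (C (m - i - l)) \<cdot> Bl l))"
      by (rule swapA)
    also have "\<dots> = (\<Sum>l\<in>{1..m}. cst (q l) \<cdot> (M (m - l) \<cdot> Bl l))"
      by (rule sum.cong[OF refl]) (simp add: M cst_sum ncmul_sum_left diff_commute add.commute)
    finally show ?thesis by simp
  qed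
  have T2: "(\<Sum>i\<le>n. sh (a i) (C (n - i))) = (\<Sum>l\<in>{1..n}. cst (p l) \<cdot> (M (n - l) \<cdot> Bl l))"
  proof -
    have "(\<Sum>i\<le>n. sh (a i) (C (n - i))) = (\<Sum>i\<le>n. \<Sum>l\<in>{1..i}. cst (p l) \<cdot> (sh (A (i - l)) (C (n - i)) \<cdot> Bl l))"
      by (simp add: a_def sh_sum_left sh_cst_left sh_Bl_left)
    also have "\<dots> = (\<Sum>l\<in>{1..n}. \<Sum>i\<le>n - l. cst (p l) \<cdot> (sh (A (l + i - l)) (C (n - (l + i))) \<cdot> Bl l))"
      by (rule swapB)
    also have "\<dots> = (\<Sum>l\<in>{1..n}. cst (p l) \<cdot> (M (n - l) \<cdot> Bl l))"
      by (rule sum.cong[OF refl]) (simp add: M cst_sum ncmul_sum_left diff_diff_add)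
    finally show ?thesis .
  qed
  have T3: "(\<Sum>i\<le>n. sh (a i) (c (n - i))) = (\<Sum>l\<in>{1..n}. cst (p l) \<cdot> (T1 (n - l) \<cdot> Bl l))"
  proof -
    have "(\<Sum>i\<le>n. sh (a i) (c (n - i))) = (\<Sum>i\<le>n. \<Sum>l\<in>{1..i}. cst (p l) \<cdot> (sh (A (i - l)) (c (n - i)) \<cdot> Bl l))"
      by (simp add: a_def sh_sum_left sh_cst_left sh_Bl_left)
    also have "\<dots> = (\<Sum>l\<in>{1..n}. \<Sum>i\<le>n - l. cst (p l) \<cdot> (sh (A (l + i - l)) (c (n - (l + i))) \<cdot> Bl l))"
      by (rule swapB)
    also have "\<dots> = (\<Sum>l\<in>{1..n}. cst (p l) \<cdot> (T1 (n - l) \<cdot> Bl l))"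
      by (rule sum.cong[OF refl]) (simp add: T1_def cst_sum ncmul_sum_left diff_diff_add)
    finally show ?thesis .
  qed
  have "M n = (\<Sum>i\<le>n. rmul (sh (A i) (c (n - i)) + sh (a i) (C (n - i)) + cst hbar \<cdot> sh (a i) (c (n - i))) La)"
    by (simp add: M S)
  also have "\<dots> = rmul (T1 n + (\<Sum>i\<le>n. sh (a i) (C (n - i))) + cst hbar \<cdot> (\<Sum>i\<le>n. sh (a i) (c (n - i)))) La"
    by (simp add: rmul_La_sum sum.distrib cst_sum T1_def)
  also have "\<dots> = rmul (sh (A n) (c 0) + (\<Sum>l\<in>{1..n}. cst (q l) \<cdot> (M (n - l) \<cdot> Bl l))
     + (\<Sum>l\<in>{1..n}. cst (p l) \<cdot> (M (n - l) \<cdot> Bl l))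
     + cst hbar \<cdot> (\<Sum>l\<in>{1..n}. cst (p l) \<cdot> ((sh (A (n - l)) (c 0)
          + (\<Sum>l2\<in>{1..n - l}. cst (q l2) \<cdot> (M (n - l - l2) \<cdot> Bl l2))) \<cdot> Bl l))) La"
    by (simp only: T1 T2 T3)
  finally show ?thesis .
qed


definition acoef :: "nat \<Rightarrow> coef" where "acoef l = monom (inverse (fact l)) (l - 1)"
definition dcoef :: "nat \<Rightarrow> coef" where "dcoef l = (if l = 1 then 1 else 0)"

lemma pCons_monom: "[:c::rat:] * monom 1 k = monom c k"
  by (simp add: smult_monom)

lemma e1_g1: "e 1 - g 1 = hb"
proof -
  have "e 1 = mono [Lb] \<cdot> mono [La] + mono [Lb] \<cdot> cst hbar"
    by (simp add: e_def ncmul_add_right mono_nil)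
  then show ?thesis by (simp add: g_def mono_app[symmetric] hb_def cst_mult_comm)
qed

lemma e1_g1': "e (Suc 0) - g (Suc 0) = hb" using e1_g1 by simp

lemma rep_ba: "replicate k Lb @ [Lb, La] = Lb # replicate k Lb @ [La]"
  by (induction k) auto

lemma RG_sg: "1 \<le> l \<Longrightarrow> RG l = sg (replicate l Lb @ [La]) (acoef l)"
proof -
  assume l: "1 \<le> l"
  then obtain k where k: "l = Suc k" by (cases l) auto
  have r: "replicate k Lb @ [Lb, La] = replicate l Lb @ [La]"
    using k by (simp add: replicate_append_same[symmetric])
  have "RG l = cst [:inverse (fact l):] \<cdot> sg (replicate k Lb) (monom 1 k) \<cdot> sg [Lb, La] 1"
    using k by (simp add: RG_def Rser_def e1_g1' ncpow_hb) (simp add: g_sg)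
  also have "\<dots> = sg (replicate l Lb @ [La]) (acoef l)"
    by (simp add: cst_sg single_mult acoef_def smult_monom k rep_ba)
  finally show ?thesis .
qed

lemma RG0: "RG 0 = 0" by (simp add: RG_def Rser_def)

lemma RG1: "RG 1 = g 1" by (simp add: RG_sg acoef_def g_sg monom_0 one_pCons)

lemma mult_sg: "x \<cdot> sg w c = cst c \<cdot> (x \<cdot> mono w)"
  by (simp add: cst_mono[symmetric] cst_mult_right)

lemma mult_rep_a: "x \<cdot> mono (replicate l Lb @ [La]) = rmul (x \<cdot> Bl l) La"
  by (simp add: Bl_def rmul_def mono_app ncmul_assoc)

lemma Y_rec: "1 \<le> i \<Longrightarrow> geom RG i = rmul (\<Sum>l\<in>{1..i}. cst (acoef l) \<cdot> (geom RG (i - l) \<cdot> Bl l)) La"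
  by (simp add: geom_rec[where F=RG, OF RG0] RG_sg mult_sg mult_rep_a rmul_sum rmul_cst)

lemma sum_dcoef: "1 \<le> i \<Longrightarrow> (\<Sum>l\<in>{1..i}. cst (dcoef l) \<cdot> f l) = f 1"
proof -
  assume i: "1 \<le> i"
  have "(\<Sum>l\<in>{1..i}. cst (dcoef l) \<cdot> f l) = (\<Sum>l\<in>{1..i}. if l = 1 then f 1 else 0)"
    by (rule sum.cong) (auto simp: dcoef_def)
  also have "\<dots> = f 1" using i by (simp add: sum.delta)
  finally show ?thesis .
qed

lemma g1_PB: "x \<cdot> g 1 = rmul (x \<cdot> Bl 1) La"
  by (simp add: g_def Bl_def rmul_def mono_app[symmetric] ncmul_assoc)

lemma Z_rec: "1 \<le> i \<Longrightarrow> geom GX i = rmul (\<Sum>l\<in>{1..i}. cst (dcoef l) \<cdot> (geom GX (i - l) \<cdot> Bl l)) La"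
proof -
  assume i: "1 \<le> i"
  then obtain k where k: "i = Suc k" by (cases i) auto
  have "(\<Sum>l\<in>{1..i}. cst (dcoef l) \<cdot> (geom GX (i - l) \<cdot> Bl l)) = geom GX (i - 1) \<cdot> Bl 1"
    by (rule sum_dcoef[OF i])
  then show ?thesis by (simp add: geom_GX k ncpow_right[of _ k] g1_PB[simplified] del: ncpow.simps)
qed

lemma W_rec: "1 \<le> j \<Longrightarrow> x \<cdot> geom GX j = rmul (\<Sum>l\<in>{1..j}. cst (dcoef l) \<cdot> ((x \<cdot> geom GX (j - l)) \<cdot> Bl l)) La"
  by (simp add: Z_rec rmul_assoc[symmetric] ncmul_sum_right cst_mult_right ncmul_assoc)

lemma V_rec: "1 \<le> j \<Longrightarrow> x \<cdot> geom RG j = rmul (\<Sum>l\<in>{1..j}. cst (acoef l) \<cdot> ((x \<cdot> geom RG (j - l)) \<cdot> Bl l)) La"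
  by (simp add: Y_rec rmul_assoc[symmetric] ncmul_sum_right cst_mult_right ncmul_assoc)

lemma geom0: "geom F 0 = ncone" by (simp add: geom_def sone_def)

lemma inS_Dc_sg: "(w = [] \<or> hd w = Lb) \<Longrightarrow> (\<And>j. coeff c j \<noteq> 0 \<Longrightarrow> sfun w \<le> j) \<Longrightarrow> inS Dc (sg w c)"
  by (rule inS_sg) (auto simp: Dc_def)

lemma inS_Dp_sg: "w \<noteq> [] \<Longrightarrow> hd w = Lb \<Longrightarrow> (\<And>j. coeff c j \<noteq> 0 \<Longrightarrow> sfun w \<le> j \<and> 1 \<le> j) \<Longrightarrow> inS Dp (sg w c)"
  by (rule inS_sg) (auto simp: Dp_def)

lemma sfun_rep_b_a: "1 \<le> l \<Longrightarrow> sfun (replicate l Lb @ [La]) = l - 1"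
proof -
  assume l: "1 \<le> l"
  have "endb (replicate l Lb)" using l by (simp add: endb_def)
  then show ?thesis using sfun_snoc_a[of "replicate l Lb"] sfun_repb[of l] by simp
qed

lemma hd_rep_b_a: "1 \<le> l \<Longrightarrow> hd (replicate l Lb @ [La]) = Lb"
  by (cases l) auto

lemma RG_Dc: "inS Dc (RG l)"
proof (cases "l = 0")
  case True then show ?thesis by (simp add: RG0)
next
  case False
  then have "RG l = sg (replicate l Lb @ [La]) (acoef l)" by (simp add: RG_sg)
  then show ?thesis using False
    by (simp only:) (intro inS_Dc_sg, auto simp: acoef_def sfun_rep_b_a hd_rep_b_a split: if_splits)
qed

lemma RG_Dp: "2 \<le> l \<Longrightarrow> inS Dp (RG l)"
proof -
  assume l: "2 \<le> l"
  then have "RG l = sg (replicate l Lb @ [La]) (acoef l)" by (simp add: RG_sg)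
  then show ?thesis using l
    by (simp only:) (intro inS_Dp_sg, auto simp: acoef_def sfun_rep_b_a hd_rep_b_a split: if_splits)
qed

lemma Dc_ncone: "inS Dc ncone" by (simp add: ncone_sg inS_Dc_sg)

lemma inS_Dc_sum: "(\<And>i. i \<in> I \<Longrightarrow> inS Dc (f i)) \<Longrightarrow> inS Dc (\<Sum>i\<in>I. f i)" by (rule inS_sum)

lemma Y_Dc: "inS Dc (geom RG n)"
proof (induction n rule: less_induct)
  case (less n)
  show ?case
  proof (cases "n = 0")
    case True then show ?thesis by (simp add: geom0 Dc_ncone)
  next
    case False
    then have "geom RG n = (\<Sum>l\<in>{1..n}. geom RG (n - l) \<cdot> RG l)" by (simp add: geom_rec[where F=RG, OF RG0])
    moreover have "inS Dc (\<Sum>l\<in>{1..n}. geom RG (n - l) \<cdot> RG l)"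
      by (rule inS_sum, rule Dc_mult) (use less False in \<open>auto intro: RG_Dc\<close>)
    ultimately show ?thesis by simp
  qed
qed

lemma g1_Dc: "inS Dc (g 1)" by (simp add: g_sg inS_Dc_sg)

lemma Z_Dc: "inS Dc (geom GX n)"
  by (induction n) (auto simp: geom_GX ncone_def[symmetric] Dc_ncone ncpow_right intro!: Dc_mult g1_Dc[simplified] simp del: ncpow.simps(2))

lemma YZ_Dp: "inS Dp (geom RG n - geom GX n)"
proof (induction n rule: less_induct)
  case (less n)
  show ?case
  proof (cases "n = 0")
    case True then show ?thesis by (simp add: geom0)
  next
    case False
    then obtain k where k: "n = Suc k" by (cases n) auto
    have Y: "geom RG n = geom RG k \<cdot> RG 1 + (\<Sum>l\<in>{2..n}. geom RG (n - l) \<cdot> RG l)"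
    proof -
      have "{1..n} = insert 1 {2..n}" using False by auto
      then show ?thesis using False k by (simp add: geom_rec[where F=RG, OF RG0])
    qed
    have Z: "geom GX n = geom GX k \<cdot> RG 1" by (simp add: geom_GX k ncpow_right RG1[simplified] del: ncpow.simps)
    have "geom RG n - geom GX n = (geom RG k - geom GX k) \<cdot> RG 1 + (\<Sum>l\<in>{2..n}. geom RG (n - l) \<cdot> RG l)"
      by (simp add: Y Z ncmul_diff_left)
    moreover have "inS Dp ((geom RG k - geom GX k) \<cdot> RG 1)"
      by (rule Dp_mult_left) (use less k in \<open>auto intro: RG_Dc\<close>)
    moreover have "inS Dp (\<Sum>l\<in>{2..n}. geom RG (n - l) \<cdot> RG l)"
      by (rule inS_sum, rule Dp_mult_right) (auto intro: Y_Dc RG_Dp)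
    ultimately show ?thesis by (simp add: inS_add)
  qed
qed


definition eqv :: "nc \<Rightarrow> nc \<Rightarrow> bool" where "eqv a b \<longleftrightarrow> inS Dp (a - b)"

lemma eqv_refl: "eqv a a" by (simp add: eqv_def)
lemma eqv_sym: "eqv a b \<Longrightarrow> eqv b a"
  unfolding eqv_def by (drule inS_uminus) simp
lemma eqv_trans: "eqv a b \<Longrightarrow> eqv b c \<Longrightarrow> eqv a c"
  unfolding eqv_def by (drule (1) inS_add) simp
lemma eqv_add: "eqv a b \<Longrightarrow> eqv c d \<Longrightarrow> eqv (a + c) (b + d)"
  unfolding eqv_def by (drule (1) inS_add) (simp add: algebra_simps)
lemma eqv_sum: "(\<And>i. i \<in> I \<Longrightarrow> eqv (f i) (h i)) \<Longrightarrow> eqv (\<Sum>i\<in>I. f i) (\<Sum>i\<in>I. h i)"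
  unfolding eqv_def by (drule inS_sum) (simp add: sum_subtractf)
lemma eqv_cst: "eqv x y \<Longrightarrow> eqv (cst [:r:] \<cdot> x) (cst [:r:] \<cdot> y)"
  unfolding eqv_def by (drule inS_cst_const[of _ _ r]) (simp add: ncmul_diff_right)
lemma eqv_sh_left: "eqv x x' \<Longrightarrow> inS Dc y \<Longrightarrow> eqv (sh x y) (sh x' y)"
  unfolding eqv_def by (simp add: sh_diff_left[symmetric] sh_Dp_Dc)
lemma eqv_sh_right: "inS Dc x \<Longrightarrow> eqv y y' \<Longrightarrow> eqv (sh x y) (sh x y')"
  unfolding eqv_def by (simp add: sh_diff_right[symmetric] sh_Dc_Dp)
lemma eqv_mult: "eqv x x' \<Longrightarrow> eqv y y' \<Longrightarrow> inS Dc x' \<Longrightarrow> inS Dc y \<Longrightarrow> eqv (x \<cdot> y) (x' \<cdot> y')"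
proof -
  assume a: "eqv x x'" "eqv y y'" "inS Dc x'" "inS Dc y"
  have "x \<cdot> y - x' \<cdot> y' = (x - x') \<cdot> y + x' \<cdot> (y - y')"
    by (simp add: ncmul_diff_left ncmul_diff_right)
  moreover have "inS Dp ((x - x') \<cdot> y + x' \<cdot> (y - y'))"
    using a unfolding eqv_def by (intro inS_add Dp_mult_left Dp_mult_right) auto
  ultimately show ?thesis by (simp add: eqv_def)
qed

abbreviation G :: "nat \<Rightarrow> nc" where "G n \<equiv> ncpow (g 1) n"

lemma G_Dc: "inS Dc (G n)" using Z_Dc[of n] by (simp add: geom_GX)

lemma G_Suc: "G (Suc n) = rmul (G n \<cdot> Bl 1) La"
  by (simp only: ncpow_right g1_PB)

lemma G1: "G 1 = g 1" by simp

lemma sfun_ba: "sfun (t @ [Lb, La]) = sfun t"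
  using sfun_snoc_a'[of "t @ [Lb]"] sfun_snoc_b[of t] by (simp add: endb_def)

lemma sfun_bba: "sfun (t @ [Lb, Lb, La]) = Suc (sfun t)"
  using sfun_snoc_a'[of "t @ [Lb, Lb]"] sfun_snoc_b[of t] sfun_snoc_b[of "t @ [Lb]"] by (simp add: endb_def)

lemma PB_Dp: "inS Dp x \<Longrightarrow> inS Dp (rmul (x \<cdot> Bl 1) La)"
proof -
  assume x: "inS Dp x"
  have "inS (\<lambda>j t. \<exists>t0. Dp j t0 \<and> t = t0 @ [Lb]) (x \<cdot> Bl 1)"
    unfolding Bl_def by (rule inS_mult_mono[OF x]) auto
  then show ?thesis
    by (rule inS_rmul) (auto simp: Dp_def sfun_ba hd_append)
qed

lemma PBB_Dp: "inS Dc x \<Longrightarrow> inS Dp (rmul (cst hbar \<cdot> ((x \<cdot> Bl 1) \<cdot> Bl 1)) La)"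
proof -
  assume x: "inS Dc x"
  have "inS (\<lambda>j t. \<exists>t0. Dc j t0 \<and> t = t0 @ [Lb, Lb]) ((x \<cdot> Bl 1) \<cdot> Bl 1)"
    unfolding Bl_def by (rule inS_mult_mono[OF inS_mult_mono[OF x]]) auto
  then have "inS (\<lambda>j t. \<exists>t0. Dc (j - 1) t0 \<and> 1 \<le> j \<and> t = t0 @ [Lb, Lb]) (cst hbar \<cdot> ((x \<cdot> Bl 1) \<cdot> Bl 1))"
    by (rule inS_cst) (auto simp: hbar_monom split: if_splits)
  then show ?thesis
    by (rule inS_rmul) (auto simp: Dc_def Dp_def sfun_bba hd_append split: if_splits)
qed

lemma sh_G_G: "eqv (sh (G i) (G j)) (cst [:of_nat ((i + j) choose i):] \<cdot> G (i + j))"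
proof (induction "i + j" arbitrary: i j rule: less_induct)
  case less
  show ?case
  proof (cases "i = 0 \<or> j = 0")
    case True
    then show ?thesis by (auto simp: eqv_refl one_pCons[symmetric])
  next
    case False
    then obtain i' j' where ij: "i = Suc i'" "j = Suc j'" by (cases i; cases j) auto
    define n where "n = i' + j'"
    have IH1: "eqv (sh (G i) (G j')) (cst [:of_nat ((Suc n) choose i):] \<cdot> G (Suc n))"
      using less[of i j'] ij by (simp add: n_def)
    have IH2: "eqv (sh (G i') (G j)) (cst [:of_nat ((Suc n) choose i'):] \<cdot> G (Suc n))"
      using less[of i' j] ij by (simp add: n_def)
    let ?c1 = "[:of_nat ((Suc n) choose i):] :: coef" and ?c2 = "[:of_nat ((Suc n) choose i'):] :: coef"
    have e: "sh (G i) (G j) = rmul (sh (G i) (G j') \<cdot> Bl 1) La + rmul (sh (G i') (G j) \<cdot> Bl 1) La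
        + rmul (cst hbar \<cdot> ((sh (G i') (G j') \<cdot> Bl 1) \<cdot> Bl 1)) La"
    proof -
      have "sh (G i) (G j) = sh (rmul (G i' \<cdot> Bl 1) La) (rmul (G j' \<cdot> Bl 1) La)"
        using ij G_Suc by simp
      also have "\<dots> = rmul (sh (rmul (G i' \<cdot> Bl 1) La) (G j' \<cdot> Bl 1) + sh (G i' \<cdot> Bl 1) (rmul (G j' \<cdot> Bl 1) La) + cst hbar \<cdot> sh (G i' \<cdot> Bl 1) (G j' \<cdot> Bl 1)) La"
        by (rule sh_pa_pa)
      also have "\<dots> = rmul (sh (G i) (G j' \<cdot> Bl 1) + sh (G i' \<cdot> Bl 1) (G j) + cst hbar \<cdot> sh (G i' \<cdot> Bl 1) (G j' \<cdot> Bl 1)) La"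
        using ij G_Suc by simp
      finally show ?thesis by (simp add: sh_Bl_left sh_Bl_right rmul_add)
    qed
    have "eqv (rmul (sh (G i) (G j') \<cdot> Bl 1) La) (rmul ((cst ?c1 \<cdot> G (Suc n)) \<cdot> Bl 1) La)"
      using IH1 unfolding eqv_def by (simp add: rmul_diff[symmetric] ncmul_diff_left[symmetric] PB_Dp[simplified])
    moreover have "eqv (rmul (sh (G i') (G j) \<cdot> Bl 1) La) (rmul ((cst ?c2 \<cdot> G (Suc n)) \<cdot> Bl 1) La)"
      using IH2 unfolding eqv_def by (simp add: rmul_diff[symmetric] ncmul_diff_left[symmetric] PB_Dp[simplified])
    moreover have "eqv (rmul (cst hbar \<cdot> ((sh (G i') (G j') \<cdot> Bl 1) \<cdot> Bl 1)) La) 0"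
      unfolding eqv_def by (simp add: PBB_Dp[simplified] sh_Dc_Dc G_Dc[simplified])
    ultimately have "eqv (sh (G i) (G j)) (rmul ((cst ?c1 \<cdot> G (Suc n)) \<cdot> Bl 1) La + rmul ((cst ?c2 \<cdot> G (Suc n)) \<cdot> Bl 1) La + 0)"
      unfolding e by (intro eqv_add)
    moreover have "rmul ((cst ?c1 \<cdot> G (Suc n)) \<cdot> Bl 1) La + rmul ((cst ?c2 \<cdot> G (Suc n)) \<cdot> Bl 1) La + 0
        = cst (?c1 + ?c2) \<cdot> G (Suc (Suc n))"
      by (simp only: G_Suc[of "Suc n"] cst_add ncmul_assoc rmul_assoc[symmetric] add_0_right rmul_add)
    moreover have "?c1 + ?c2 = [:of_nat ((i + j) choose i):]"
      using ij by (simp add: n_def add.commute)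
    moreover have "Suc (Suc n) = i + j" using ij n_def by simp
    ultimately show ?thesis by simp
  qed
qed


declare eqv_trans[trans]

lemma pc_mult: "[:a:] * [:b:] = [:a * b::rat:]" by simp

lemma cst1: "cst 1 = ncone" by (simp add: cst_sg ncone_sg)

lemma Dc_cst_const: "inS Dc x \<Longrightarrow> inS Dc (cst [:r:] \<cdot> x)" by (rule inS_cst_const)

lemma eqv_Dc: "eqv a b \<Longrightarrow> inS Dc b \<Longrightarrow> inS Dc a"
proof -
  assume "eqv a b" "inS Dc b"
  then have "inS Dc ((a - b) + b)" unfolding eqv_def by (rule inS_add[OF inS_Dp_Dc])
  then show ?thesis by simp
qed

lemma g_Dc: "1 \<le> k \<Longrightarrow> inS Dc (g k)"
  by (simp add: g_sg inS_Dc_sg, cases k) (auto intro!: inS_Dc_sg simp: sfun_rep_a[of _ "[]", simplified])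

lemma hb_Dp: "inS Dp (cst hbar \<cdot> mono w) \<longleftrightarrow> True" if "w \<noteq> []" "hd w = Lb" "sfun w \<le> 1"
  using that by (simp add: cst_mono hbar_monom, intro inS_Dp_sg) (auto split: if_splits)

lemma e_split: "1 \<le> k \<Longrightarrow> e k = g k + cst hbar \<cdot> mono (Lb # replicate (k - 1) La)"
proof -
  assume k: "1 \<le> k"
  have "e k = mono [Lb] \<cdot> mono [La] \<cdot> mono (replicate (k - 1) La) + mono [Lb] \<cdot> cst hbar \<cdot> mono (replicate (k - 1) La)"
    by (simp add: e_def ncmul_add_right ncmul_add_left)
  also have "\<dots> = g k + cst hbar \<cdot> mono (Lb # replicate (k - 1) La)"
    using k by (simp add: g_def mono_app[symmetric] cst_mult_comm ncmul_assoc cst_mult_right)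
      (cases k, auto)
  finally show ?thesis .
qed

lemma sfun_b_as: "sfun (Lb # replicate k La) = (if k = 0 then 1 else 0)"
  by (cases k) (auto simp: sfun_rep_a[of _ "[]", simplified])

lemma e_eqv: "1 \<le> k \<Longrightarrow> eqv (e k) (g k)"
  unfolding eqv_def using hb_Dp[of "Lb # replicate (k - 1) La"]
  by (simp add: e_split sfun_b_as)

lemma e_Dc: "1 \<le> k \<Longrightarrow> inS Dc (e k)"
  using e_eqv g_Dc eqv_Dc by blast

lemma shpow_g: "eqv (shpow (g 1) j) (cst [:fact j:] \<cdot> G j) \<and> inS Dc (shpow (g 1) j)"
proof (induction j)
  case 0 then show ?case by (simp add: one_pCons[symmetric] eqv_refl Dc_ncone cst1)
next
  case (Suc j)
  have g1: "inS Dc (g 1)" by (rule g_Dc) simp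
  have "eqv (sh (g 1) (shpow (g 1) j)) (sh (g 1) (cst [:fact j:] \<cdot> G j))"
    using Suc.IH g1 by (intro eqv_sh_right) auto
  also have "sh (g 1) (cst [:fact j:] \<cdot> G j) = cst [:fact j:] \<cdot> sh (G 1) (G j)"
    by (simp add: sh_cst_right)
  finally have a: "eqv (sh (g 1) (shpow (g 1) j)) (cst [:fact j:] \<cdot> sh (G 1) (G j))" .
  have "eqv (cst [:fact j:] \<cdot> sh (G 1) (G j)) (cst [:fact j:] \<cdot> (cst [:of_nat ((1 + j) choose 1):] \<cdot> G (1 + j)))"
    by (rule eqv_cst, rule sh_G_G)
  also have "cst [:fact j:] \<cdot> (cst [:of_nat ((1 + j) choose 1):] \<cdot> G (1 + j)) = cst [:fact (Suc j):] \<cdot> G (Suc j)"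
    by (simp add: cst_cst algebra_simps)
  finally have b: "eqv (cst [:fact j:] \<cdot> sh (G 1) (G j)) (cst [:fact (Suc j):] \<cdot> G (Suc j))" .
  show ?case using eqv_trans[OF a b] Suc.IH g1 by (auto intro: sh_Dc_Dc)
qed

lemma shpow_e: "eqv (shpow (e 1) i) (shpow (g 1) i) \<and> inS Dc (shpow (e 1) i)"
proof (induction i)
  case 0 then show ?case by (simp add: eqv_refl Dc_ncone)
next
  case (Suc i)
  have g1: "inS Dc (g 1)" by (rule g_Dc) simp
  have e1: "inS Dc (e 1)" by (rule e_Dc) simp
  have "eqv (sh (e 1) (shpow (e 1) i)) (sh (g 1) (shpow (e 1) i))"
    using Suc.IH e_eqv[of 1] by (intro eqv_sh_left) auto
  also have "eqv (sh (g 1) (shpow (e 1) i)) (sh (g 1) (shpow (g 1) i))"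
    using Suc.IH g1 by (intro eqv_sh_right) auto
  finally show ?case using Suc.IH e1 by (auto intro: sh_Dc_Dc)
qed

lemma eqv_trans': "eqv a b \<Longrightarrow> b = c \<Longrightarrow> eqv a c" by simp

lemma fact_choose_rat: "j \<le> m \<Longrightarrow> (fact j :: rat) * fact (m - j) * of_nat (m choose j) = fact m"
  using binomial_fact_lemma[of j m] by (metis of_nat_fact of_nat_mult)

lemma E1_eqv: "eqv (E1 m) (G m) \<and> inS Dc (E1 m)"
proof -
  define X where "X j = sh (shpow (g 1) j) (shpow (e 1) (m - j))" for j
  have GDc: "inS Dc (cst [:r:] \<cdot> G n)" for r n by (rule Dc_cst_const, rule G_Dc)
  have X: "eqv (X j) (cst [:fact m:] \<cdot> G m)" if j: "j \<le> m" for j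
  proof -
    have "eqv (X j) (sh (cst [:fact j:] \<cdot> G j) (shpow (e 1) (m - j)))"
      unfolding X_def using shpow_g shpow_e by (intro eqv_sh_left) auto
    also have "eqv (sh (cst [:fact j:] \<cdot> G j) (shpow (e 1) (m - j))) (sh (cst [:fact j:] \<cdot> G j) (shpow (g 1) (m - j)))"
      using shpow_e GDc by (intro eqv_sh_right) auto
    also have "eqv (sh (cst [:fact j:] \<cdot> G j) (shpow (g 1) (m - j))) (sh (cst [:fact j:] \<cdot> G j) (cst [:fact (m - j):] \<cdot> G (m - j)))"
      using shpow_g GDc by (intro eqv_sh_right) auto
    also have "sh (cst [:fact j:] \<cdot> G j) (cst [:fact (m - j):] \<cdot> G (m - j)) = cst [:fact j * fact (m - j):] \<cdot> sh (G j) (G (m - j))"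
      by (simp add: sh_cst_left sh_cst_right cst_cst)
    also have "eqv (cst [:fact j * fact (m - j):] \<cdot> sh (G j) (G (m - j))) (cst [:fact j * fact (m - j):] \<cdot> (cst [:of_nat ((j + (m - j)) choose j):] \<cdot> G (j + (m - j))))"
      by (rule eqv_cst, rule sh_G_G)
    also have "cst [:fact j * fact (m - j):] \<cdot> (cst [:of_nat ((j + (m - j)) choose j):] \<cdot> G (j + (m - j))) = cst [:fact m:] \<cdot> G m"
    proof -
      have "rat_of_nat (m choose j) * (fact j * fact (m - j)) = fact m"
        using fact_choose_rat[OF j] by (simp add: algebra_simps)
      then show ?thesis using j by (simp add: cst_cst)
    qed
    finally show ?thesis by (rule eqv_trans') simp
  qed
  have "E1 m = cst [:inverse (fact (Suc m)):] \<cdot> (\<Sum>j\<le>m. X j)" by (simp add: E1_def X_def)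
  also have "eqv (cst [:inverse (fact (Suc m)):] \<cdot> (\<Sum>j\<le>m. X j)) (cst [:inverse (fact (Suc m)):] \<cdot> (\<Sum>j\<le>m. cst [:fact m:] \<cdot> G m))"
    by (rule eqv_cst, rule eqv_sum) (use X in auto)
  also have "cst [:inverse (fact (Suc m)):] \<cdot> (\<Sum>j\<le>m. cst [:fact m:] \<cdot> G m) = G m"
  proof -
    have cs: "(\<Sum>j\<le>m. [:fact m:]) = ([:of_nat (Suc m) * fact m:] :: coef)"
      by (simp add: of_nat_poly mult.commute)
    have "(\<Sum>j\<le>m. cst [:fact m:] \<cdot> G m) = cst [:of_nat (Suc m) * fact m:] \<cdot> G m"
      by (simp only: ncmul_sum_left[symmetric] cst_sum_coef[symmetric] cs)
    moreover have "inverse (fact (Suc m)) * (of_nat (Suc m) * fact m) = (1::rat)"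
      by (metis fact_Suc fact_nonzero left_inverse)
    moreover have "[:inverse (fact (Suc m)):] * [:of_nat (Suc m) * fact m:] = ([:inverse (fact (Suc m)) * (of_nat (Suc m) * fact m):] :: coef)"
      by (rule pc_mult)
    ultimately show ?thesis by (simp only: cst_cst one_pCons[symmetric] cst1 ncone_left)
  qed
  finally have "eqv (E1 m) (G m)" .
  then show ?thesis using eqv_Dc G_Dc by blast
qed

fun Epre :: "nat \<Rightarrow> nat list \<Rightarrow> nc" where
  "Epre s [] = E1 s"
| "Epre s (k # ks) = (if k = 1 then Epre (Suc s) ks else E1 s \<cdot> e k \<cdot> Epre 0 ks)"

lemma E1_0: "E1 0 = ncone"
  by (simp add: E1_def one_pCons[symmetric] cst1)

lemma Eaux_snoc: "k \<noteq> 1 \<Longrightarrow> Eaux s (ks @ [k]) = Epre s ks \<cdot> e k"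
  by (induction ks arbitrary: s) (auto simp: E1_0 ncmul_assoc)

lemma gidx_Nil: "gidx [] = ncone" by (simp add: gidx_def prodl_Nil)
lemma gidx_Cons: "gidx (k # ks) = g k \<cdot> gidx ks" by (simp add: gidx_def prodl_Cons)
lemma gidx_snoc: "gidx (ks @ [k]) = gidx ks \<cdot> g k"
  by (simp add: gidx_def prodl_append prodl_Cons prodl_Nil)

lemma gidx_Dc: "(\<forall>k\<in>set ks. 1 \<le> k) \<Longrightarrow> inS Dc (gidx ks)"
  by (induction ks) (auto simp: gidx_Nil gidx_Cons Dc_ncone intro!: Dc_mult g_Dc)

lemma Epre_eqv: "(\<forall>k\<in>set ks. 1 \<le> k) \<Longrightarrow> eqv (Epre s ks) (G s \<cdot> gidx ks) \<and> inS Dc (Epre s ks)"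
proof (induction ks arbitrary: s)
  case Nil then show ?case using E1_eqv[of s] by (simp add: gidx_Nil)
next
  case (Cons k ks)
  show ?case
  proof (cases "k = 1")
    case True
    have e: "G (Suc s) \<cdot> gidx ks = G s \<cdot> gidx (k # ks)"
      using True by (simp add: gidx_Cons ncpow_right ncmul_assoc del: ncpow.simps)
    have h: "eqv (Epre (Suc s) ks) (G (Suc s) \<cdot> gidx ks) \<and> inS Dc (Epre (Suc s) ks)"
      using Cons.IH[of "Suc s"] Cons.prems by (simp del: ncpow.simps)
    then show ?thesis using True e by (simp del: ncpow.simps)
  next
    case False
    have k: "1 \<le> k" "\<forall>k\<in>set ks. 1 \<le> k" using Cons.prems by auto
    have IH: "eqv (Epre 0 ks) (gidx ks)" "inS Dc (Epre 0 ks)" using Cons.IH[OF k(2), of 0] by auto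
    have a: "eqv (E1 s \<cdot> e k) (G s \<cdot> g k)"
      using E1_eqv[of s] e_eqv[OF k(1)] G_Dc e_Dc[OF k(1)] by (intro eqv_mult) auto
    have "eqv (E1 s \<cdot> e k \<cdot> Epre 0 ks) (G s \<cdot> g k \<cdot> gidx ks)"
      by (rule eqv_mult[OF a IH(1)]) (use IH G_Dc g_Dc[OF k(1)] in \<open>auto intro: Dc_mult\<close>)
    moreover have "inS Dc (E1 s \<cdot> e k \<cdot> Epre 0 ks)"
      using E1_eqv[of s] e_Dc[OF k(1)] IH by (auto intro: Dc_mult)
    ultimately show ?thesis using False by (simp add: gidx_Cons ncmul_assoc)
  qed
qed


lemma acoef_nz: "coeff (acoef l) i \<noteq> 0 \<Longrightarrow> i = l - 1"
  by (auto simp: acoef_def split: if_splits)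
lemma dcoef_nz: "coeff (dcoef l) i \<noteq> 0 \<Longrightarrow> l = 1 \<and> i = 0"
  by (auto simp: dcoef_def coeff_1 split: if_splits)
lemma hacoef_nz: "1 \<le> l \<Longrightarrow> coeff (hbar * acoef l) i \<noteq> 0 \<Longrightarrow> i = l"
  by (auto simp: acoef_def hbar_monom mult_monom split: if_splits)
lemma hdcoef_nz: "coeff (hbar * dcoef l) i \<noteq> 0 \<Longrightarrow> l = 1 \<and> i = 1"
  by (auto simp: dcoef_def hbar_def coeff_pCons split: if_splits nat.splits)

lemma Bl_Bl: "x \<cdot> Bl a \<cdot> Bl b = x \<cdot> Bl (a + b)"
  by (simp add: Bl_def ncmul_assoc mono_app[symmetric] replicate_add)

lemma Bl_mult1: "Bl a \<cdot> Bl 1 = Bl (Suc a)"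
  by (simp add: Bl_def mono_app[symmetric] replicate_append_same)

lemma collapse1:
  "(\<Sum>l\<in>{1..n}. cst (acoef l) \<cdot> ((\<Sum>l2\<in>{1..n - l}. cst (dcoef l2) \<cdot> (F (n - l - l2) \<cdot> Bl l2)) \<cdot> Bl l))
   = (\<Sum>l\<in>{1..n - 1}. cst (acoef l) \<cdot> (F (n - 1 - l) \<cdot> Bl (Suc l)))"
proof (cases "n = 0")
  case True then show ?thesis by simp
next
  case False
  have split: "{1..n} = insert n {1..n - 1}" using False by auto
  have "(\<Sum>l\<in>{1..n}. cst (acoef l) \<cdot> ((\<Sum>l2\<in>{1..n - l}. cst (dcoef l2) \<cdot> (F (n - l - l2) \<cdot> Bl l2)) \<cdot> Bl l))
      = (\<Sum>l\<in>{1..n - 1}. cst (acoef l) \<cdot> ((\<Sum>l2\<in>{1..n - l}. cst (dcoef l2) \<cdot> (F (n - l - l2) \<cdot> Bl l2)) \<cdot> Bl l))"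
    using False by (subst split) simp
  also have "\<dots> = (\<Sum>l\<in>{1..n - 1}. cst (acoef l) \<cdot> (F (n - 1 - l) \<cdot> Bl (Suc l)))"
  proof (rule sum.cong[OF refl])
    fix l assume l: "l \<in> {1..n - 1}"
    then have "(\<Sum>l2\<in>{1..n - l}. cst (dcoef l2) \<cdot> (F (n - l - l2) \<cdot> Bl l2)) = F (n - l - 1) \<cdot> Bl 1"
      by (intro sum_dcoef) auto
    then show "cst (acoef l) \<cdot> ((\<Sum>l2\<in>{1..n - l}. cst (dcoef l2) \<cdot> (F (n - l - l2) \<cdot> Bl l2)) \<cdot> Bl l) =
        cst (acoef l) \<cdot> (F (n - 1 - l) \<cdot> Bl (Suc l))"
      by (simp add: Bl_Bl)
  qed
  finally show ?thesis .
qed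

lemma collapse2:
  "(\<Sum>l\<in>{1..n}. cst (dcoef l) \<cdot> ((\<Sum>l2\<in>{1..n - l}. cst (acoef l2) \<cdot> (F (n - l - l2) \<cdot> Bl l2)) \<cdot> Bl l))
   = (\<Sum>l\<in>{1..n - 1}. cst (acoef l) \<cdot> (F (n - 1 - l) \<cdot> Bl (Suc l)))"
proof (cases "n = 0")
  case True then show ?thesis by simp
next
  case False
  then have "(\<Sum>l\<in>{1..n}. cst (dcoef l) \<cdot> ((\<Sum>l2\<in>{1..n - l}. cst (acoef l2) \<cdot> (F (n - l - l2) \<cdot> Bl l2)) \<cdot> Bl l))
     = (\<Sum>l2\<in>{1..n - 1}. cst (acoef l2) \<cdot> (F (n - 1 - l2) \<cdot> Bl l2)) \<cdot> Bl 1"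
    by (intro sum_dcoef[where f="\<lambda>l. (\<Sum>l2\<in>{1..n - l}. cst (acoef l2) \<cdot> (F (n - l - l2) \<cdot> Bl l2)) \<cdot> Bl l"]) auto
  also have "\<dots> = (\<Sum>l\<in>{1..n - 1}. cst (acoef l) \<cdot> (F (n - 1 - l) \<cdot> Bl (Suc l)))"
    by (simp only: ncmul_sum_left ncmul_assoc Bl_mult1)
  finally show ?thesis .
qed

lemma rmul_PN_sum: "(\<And>i. i \<in> I \<Longrightarrow> inS PN (rmul (f i) La)) \<Longrightarrow> inS PN (rmul (\<Sum>i\<in>I. f i) La)"
  by (simp add: rmul_sum inS_sum)

lemma sum_diff_cst: "(\<Sum>l\<in>I. cst (c l) \<cdot> (F l \<cdot> B l)) - (\<Sum>l\<in>I. cst (c l) \<cdot> (H l \<cdot> B l))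
   = (\<Sum>l\<in>I. cst (c l) \<cdot> ((F l - H l) \<cdot> B l))"
  by (simp add: sum_subtractf[symmetric] ncmul_diff_left ncmul_diff_right)


lemma main_nonempty:
  assumes adm: "admissible ks" and ne: "ks \<noteq> []"
  shows "inS PN (ssh (geom RG) (\<lambda>m. gidx ks \<cdot> geom GX m) n - ssh (geom GX) (\<lambda>m. Eidx ks \<cdot> geom RG m) n)"
proof -
  define ks0 where "ks0 = butlast ks"
  define k where "k = last ks"
  have ks: "ks = ks0 @ [k]" using ne by (simp add: ks0_def k_def)
  have k: "2 \<le> k" using adm ne by (simp add: admissible_def k_def)
  have ks0: "\<forall>x\<in>set ks0. 1 \<le> x" using adm ks by (auto simp: admissible_def)
  define w' where "w' = gidx ks0 \<cdot> g (k - 1)"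
  define E' where "E' = Epre 0 ks0 \<cdot> e (k - 1)"
  have rk: "replicate k La = replicate (k - 1) La @ [La]"
    using k by (cases k) (auto simp: replicate_append_same)
  have rk2: "replicate (k - 1) La = replicate (k - 2) La @ [La]"
    using k by (cases k; cases "k - 1") (auto simp: replicate_append_same)
  have gk: "g k = rmul (g (k - 1)) La"
    by (simp add: g_def rk rmul_mono del: replicate_Suc)
  have ek: "e k = rmul (e (k - 1)) La"
  proof -
    have "k - 1 - 1 = k - 2" by simp
    then show ?thesis by (simp only: e_def rk2 mono_app rmul_def ncmul_assoc)
  qed
  have wP: "gidx ks = rmul w' La" by (simp add: ks gidx_snoc gk w'_def rmul_assoc)
  have EP: "Eidx ks = rmul E' La"
    using k by (simp add: Eidx_def ks Eaux_snoc ek E'_def rmul_assoc)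
  have k1: "1 \<le> k - 1" using k by simp
  have w'Dc: "inS Dc w'" unfolding w'_def by (rule Dc_mult[OF gidx_Dc[OF ks0] g_Dc[OF k1]])
  have Ep: "eqv (Epre 0 ks0) (gidx ks0)" "inS Dc (Epre 0 ks0)" using Epre_eqv[OF ks0, of 0] by auto
  have E'Dc: "inS Dc E'" unfolding E'_def by (rule Dc_mult[OF Ep(2) e_Dc[OF k1]])
  have wE: "inS Dp (w' - E')"
  proof -
    have "eqv w' E'" unfolding w'_def E'_def
      by (rule eqv_mult[OF eqv_sym[OF Ep(1)] eqv_sym[OF e_eqv[OF k1]] Ep(2) g_Dc[OF k1]])
    then show ?thesis by (simp add: eqv_def)
  qed
  define Y where "Y = geom RG"
  define Z where "Z = geom GX"
  define W where "W m = gidx ks \<cdot> Z m" for m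
  define V where "V m = Eidx ks \<cdot> Y m" for m
  define Ln where "Ln m = (\<Sum>i\<le>m. sh (Y i) (W (m - i)))" for m
  define Rn where "Rn m = (\<Sum>i\<le>m. sh (Z i) (V (m - i)))" for m
  define cL where "cL j = (if j = 0 then w' else (\<Sum>l\<in>{1..j}. cst (dcoef l) \<cdot> (W (j - l) \<cdot> Bl l)))" for j
  define cR where "cR j = (if j = 0 then E' else (\<Sum>l\<in>{1..j}. cst (acoef l) \<cdot> (V (j - l) \<cdot> Bl l)))" for j
  have LM: "Ln m = rmul (sh (Y m) (cL 0) + (\<Sum>l\<in>{1..m}. cst (dcoef l) \<cdot> (Ln (m - l) \<cdot> Bl l))
     + (\<Sum>l\<in>{1..m}. cst (acoef l) \<cdot> (Ln (m - l) \<cdot> Bl l))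
     + cst hbar \<cdot> (\<Sum>l\<in>{1..m}. cst (acoef l) \<cdot> ((sh (Y (m - l)) (cL 0)
          + (\<Sum>l2\<in>{1..m - l}. cst (dcoef l2) \<cdot> (Ln (m - l - l2) \<cdot> Bl l2))) \<cdot> Bl l))) La" for m
  proof (rule M_rec[where A=Y and C=W and c=cL and p=acoef and q=dcoef])
    show "Y 0 = ncone" by (simp add: Y_def geom0)
    show "\<And>i. 1 \<le> i \<Longrightarrow> Y i = rmul (\<Sum>l = 1..i. cst (acoef l) \<cdot> (Y (i - l) \<cdot> Bl l)) La"
      unfolding Y_def by (rule Y_rec)
    show "\<And>j. W j = rmul (cL j) La"
    proof -
      fix j show "W j = rmul (cL j) La"
      proof (cases "j = 0")
        case True then show ?thesis by (simp add: W_def cL_def Z_def geom0 wP)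
      next
        case False then show ?thesis by (simp add: W_def cL_def Z_def W_rec)
      qed
    qed
    show "\<And>j. 1 \<le> j \<Longrightarrow> cL j = (\<Sum>l = 1..j. cst (dcoef l) \<cdot> (W (j - l) \<cdot> Bl l))"
      by (simp add: cL_def)
    show "\<And>n. Ln n = (\<Sum>i\<le>n. sh (Y i) (W (n - i)))" by (simp add: Ln_def)
  qed
  have RM: "Rn m = rmul (sh (Z m) (cR 0) + (\<Sum>l\<in>{1..m}. cst (acoef l) \<cdot> (Rn (m - l) \<cdot> Bl l))
     + (\<Sum>l\<in>{1..m}. cst (dcoef l) \<cdot> (Rn (m - l) \<cdot> Bl l))
     + cst hbar \<cdot> (\<Sum>l\<in>{1..m}. cst (dcoef l) \<cdot> ((sh (Z (m - l)) (cR 0)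
          + (\<Sum>l2\<in>{1..m - l}. cst (acoef l2) \<cdot> (Rn (m - l - l2) \<cdot> Bl l2))) \<cdot> Bl l))) La" for m
  proof (rule M_rec[where A=Z and C=V and c=cR and p=dcoef and q=acoef])
    show "Z 0 = ncone" by (simp add: Z_def geom0)
    show "\<And>i. 1 \<le> i \<Longrightarrow> Z i = rmul (\<Sum>l = 1..i. cst (dcoef l) \<cdot> (Z (i - l) \<cdot> Bl l)) La"
      unfolding Z_def by (rule Z_rec)
    show "\<And>j. V j = rmul (cR j) La"
    proof -
      fix j show "V j = rmul (cR j) La"
      proof (cases "j = 0")
        case True then show ?thesis by (simp add: V_def cR_def Y_def geom0 EP)
      next
        case False then show ?thesis by (simp add: V_def cR_def Y_def V_rec)
      qed
    qed
    show "\<And>j. 1 \<le> j \<Longrightarrow> cR j = (\<Sum>l = 1..j. cst (acoef l) \<cdot> (V (j - l) \<cdot> Bl l))"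
      by (simp add: cR_def)
    show "\<And>n. Rn n = (\<Sum>i\<le>n. sh (Z i) (V (n - i)))" by (simp add: Rn_def)
  qed
  have main: "inS PN (Ln m - Rn m)" for m
  proof (induction m rule: less_induct)
    case (less n)
    define D where "D m = Ln m - Rn m" for m
    have IH: "m < n \<Longrightarrow> inS PN (D m)" for m using less by (simp add: D_def)
    define SdL where "SdL = (\<Sum>l\<in>{1..n}. cst (dcoef l) \<cdot> (Ln (n - l) \<cdot> Bl l))"
    define SdR where "SdR = (\<Sum>l\<in>{1..n}. cst (dcoef l) \<cdot> (Rn (n - l) \<cdot> Bl l))"
    define SaL where "SaL = (\<Sum>l\<in>{1..n}. cst (acoef l) \<cdot> (Ln (n - l) \<cdot> Bl l))"
    define SaR where "SaR = (\<Sum>l\<in>{1..n}. cst (acoef l) \<cdot> (Rn (n - l) \<cdot> Bl l))"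
    define S4 where "S4 = (\<Sum>l\<in>{1..n}. cst (acoef l) \<cdot> (sh (Y (n - l)) w' \<cdot> Bl l))"
    define S5 where "S5 = (\<Sum>l\<in>{1..n}. cst (dcoef l) \<cdot> (sh (Z (n - l)) E' \<cdot> Bl l))"
    define S6L where "S6L = (\<Sum>l\<in>{1..n - 1}. cst (acoef l) \<cdot> (Ln (n - 1 - l) \<cdot> Bl (Suc l)))"
    define S6R where "S6R = (\<Sum>l\<in>{1..n - 1}. cst (acoef l) \<cdot> (Rn (n - 1 - l) \<cdot> Bl (Suc l)))"
    have X1: "(\<Sum>l\<in>{1..n}. cst (acoef l) \<cdot> ((sh (Y (n - l)) w' + (\<Sum>l2\<in>{1..n - l}. cst (dcoef l2) \<cdot> (Ln (n - l - l2) \<cdot> Bl l2))) \<cdot> Bl l))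
       = S4 + S6L"
      unfolding S4_def S6L_def by (simp only: ncmul_add_left ncmul_add_right sum.distrib collapse1)
    have X2: "(\<Sum>l\<in>{1..n}. cst (dcoef l) \<cdot> ((sh (Z (n - l)) E' + (\<Sum>l2\<in>{1..n - l}. cst (acoef l2) \<cdot> (Rn (n - l - l2) \<cdot> Bl l2))) \<cdot> Bl l))
       = S5 + S6R"
      unfolding S5_def S6R_def by (simp only: ncmul_add_left ncmul_add_right sum.distrib collapse2)
    have L: "Ln n = rmul (sh (Y n) w' + SdL + SaL + cst hbar \<cdot> (S4 + S6L)) La"
      using LM[of n] X1 by (simp add: cL_def SdL_def SaL_def)
    have R: "Rn n = rmul (sh (Z n) E' + SaR + SdR + cst hbar \<cdot> (S5 + S6R)) La"
      using RM[of n] X2 by (simp add: cR_def SdR_def SaR_def)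
    define P2 where "P2 = (\<Sum>l\<in>{1..n}. cst (dcoef l) \<cdot> (D (n - l) \<cdot> Bl l))"
    define P3 where "P3 = (\<Sum>l\<in>{1..n}. cst (acoef l) \<cdot> (D (n - l) \<cdot> Bl l))"
    define P6 where "P6 = (\<Sum>l\<in>{1..n - 1}. cst (acoef l) \<cdot> (D (n - 1 - l) \<cdot> Bl (Suc l)))"
    have P2: "P2 = SdL - SdR" unfolding P2_def SdL_def SdR_def D_def by (rule sum_diff_cst[symmetric])
    have P3: "P3 = SaL - SaR" unfolding P3_def SaL_def SaR_def D_def by (rule sum_diff_cst[symmetric])
    have P6: "P6 = S6L - S6R" unfolding P6_def S6L_def S6R_def D_def by (rule sum_diff_cst[symmetric])
    have eq: "Ln n - Rn n = rmul (sh (Y n) w' - sh (Z n) E') La + rmul P2 La + rmul P3 La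
        + rmul (cst hbar \<cdot> S4) La - rmul (cst hbar \<cdot> S5) La + rmul (cst hbar \<cdot> P6) La"
      by (simp only: L R P2 P3 P6 ncmul_add_right ncmul_diff_right rmul_add[symmetric] rmul_diff[symmetric])
         (simp add: algebra_simps)
    have PN1: "inS PN (rmul (sh (Y n) w' - sh (Z n) E') La)"
    proof -
      have "sh (Y n) w' - sh (Z n) E' = sh (Y n - Z n) w' + sh (Z n) (w' - E')"
        by (simp add: sh_diff_left sh_diff_right)
      moreover have "inS PN (rmul (sh (Y n - Z n) w') La)"
        by (rule lemmaV2[OF _ w'Dc]) (simp add: Y_def Z_def YZ_Dp)
      moreover have "inS PN (rmul (sh (Z n) (w' - E')) La)"
        by (rule lemmaV1[OF _ wE]) (simp add: Z_def Z_Dc)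
      ultimately show ?thesis by (simp add: rmul_add inS_add)
    qed
    have PN2: "inS PN (rmul P2 La)" unfolding P2_def
    proof (rule rmul_PN_sum)
      fix l assume l: "l \<in> {1..n}"
      show "inS PN (rmul (cst (dcoef l) \<cdot> (D (n - l) \<cdot> Bl l)) La)"
        unfolding Bl_def by (rule closure_PN) (use l IH dcoef_nz in auto)
    qed
    have PN3: "inS PN (rmul P3 La)" unfolding P3_def
    proof (rule rmul_PN_sum)
      fix l assume l: "l \<in> {1..n}"
      show "inS PN (rmul (cst (acoef l) \<cdot> (D (n - l) \<cdot> Bl l)) La)"
        unfolding Bl_def by (rule closure_PN) (use l IH acoef_nz in auto)
    qed
    have PN4: "inS PN (rmul (cst hbar \<cdot> S4) La)" unfolding S4_def cst_sum
    proof (rule rmul_PN_sum)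
      fix l assume l: "l \<in> {1..n}"
      have "inS Dc (sh (Y (n - l)) w')" by (rule sh_Dc_Dc[OF _ w'Dc]) (simp add: Y_def Y_Dc)
      then show "inS PN (rmul (cst hbar \<cdot> (cst (acoef l) \<cdot> (sh (Y (n - l)) w' \<cdot> Bl l))) La)"
        unfolding Bl_def cst_cst by (rule closure_Dc) (use l hacoef_nz in auto)
    qed
    have PN5: "inS PN (rmul (cst hbar \<cdot> S5) La)" unfolding S5_def cst_sum
    proof (rule rmul_PN_sum)
      fix l assume l: "l \<in> {1..n}"
      have "inS Dc (sh (Z (n - l)) E')" by (rule sh_Dc_Dc[OF _ E'Dc]) (simp add: Z_def Z_Dc)
      then show "inS PN (rmul (cst hbar \<cdot> (cst (dcoef l) \<cdot> (sh (Z (n - l)) E' \<cdot> Bl l))) La)"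
        unfolding Bl_def cst_cst by (rule closure_Dc) (use l hdcoef_nz in auto)
    qed
    have PN6: "inS PN (rmul (cst hbar \<cdot> P6) La)" unfolding P6_def cst_sum
    proof (rule rmul_PN_sum)
      fix l assume l: "l \<in> {1..n - 1}"
      show "inS PN (rmul (cst hbar \<cdot> (cst (acoef l) \<cdot> (D (n - 1 - l) \<cdot> Bl (Suc l)))) La)"
        unfolding Bl_def cst_cst by (rule closure_PN) (use l IH hacoef_nz in auto)
    qed
    show ?case unfolding eq using PN1 PN2 PN3 PN4 PN5 PN6 by (intro inS_add inS_diff)
  qed
  have "ssh (geom RG) (\<lambda>m. gidx ks \<cdot> geom GX m) n = Ln n" by (simp add: ssh_def Ln_def W_def Y_def Z_def)
  moreover have "ssh (geom GX) (\<lambda>m. Eidx ks \<cdot> geom RG m) n = Rn n" by (simp add: ssh_def Rn_def V_def Y_def Z_def)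
  ultimately show ?thesis using main by simp
qed


lemma main_empty:
  "ssh (geom RG) (\<lambda>m. gidx [] \<cdot> geom GX m) n - ssh (geom GX) (\<lambda>m. Eidx [] \<cdot> geom RG m) n = 0"
proof -
  have "ssh (geom GX) (\<lambda>m. Eidx [] \<cdot> geom RG m) n = (\<Sum>i\<le>n. sh (geom GX i) (geom RG (n - i)))"
    by (simp add: ssh_def Eidx_def E1_0)
  also have "\<dots> = (\<Sum>i\<le>n. sh (geom GX (n - i)) (geom RG i))"
    by (rule sum.reindex_bij_witness[where i="\<lambda>i. n - i" and j="\<lambda>i. n - i"]) auto
  also have "\<dots> = (\<Sum>i\<le>n. sh (geom RG i) (geom GX (n - i)))"
    by (simp add: sh_comm)
  also have "\<dots> = ssh (geom RG) (\<lambda>m. gidx [] \<cdot> geom GX m) n"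
    by (simp add: ssh_def gidx_Nil)
  finally show ?thesis by simp
qed

theorem lemma5p9:
  fixes ks :: "nat list"
  assumes "admissible ks"
  shows "\<forall>n. ssh (geom RG) (\<lambda>m. gidx ks \<cdot> geom GX m) n
            - ssh (geom GX) (\<lambda>m. Eidx ks \<cdot> geom RG m) n \<in> frak_n"
proof
  fix n
  show "ssh (geom RG) (\<lambda>m. gidx ks \<cdot> geom GX m) n - ssh (geom GX) (\<lambda>m. Eidx ks \<cdot> geom RG m) n \<in> frak_n"
  proof (cases "ks = []")
    case True then show ?thesis using main_empty frak_n_zero by simp
  next
    case False then show ?thesis using main_nonempty[OF assms False] inS_PN_frak by blast
  qed
qed


end
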